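(* For $n\in\mathbb Z$ let $A_n=\{a\in A:\rho^{\mathbb K}_\theta(a)=e^{in\theta}a\ \forall\theta\}$ and $B_n=\{b\in B:\rho^{\mathbb L}_\theta(b)=e^{in\theta}b\ \forall\theta\}$. Then $A_n=\{U^n(\alpha(\mathbb{K})+M^+_f):\alpha\in c_0(\mathbb{Z}_{\ge0}),f\in C(G)\}$ for $n\ge0$, and $A_n=\{(\alpha(\mathbb{K})+M^+_f)(U^* )^{-n}:\alpha\in c_0(\mathbb{Z}_{\ge0}),f\in C(G)\}$ for $n<0$; and $B_n=\{V^nM_f: f\in C(G)\}$ for $n\ge0$, $B_n=\{M_fV^n:f\in C(G)\}$ for $n<0$.
   Context: Setup: $G$ is an infinite compact (Hausdorff) abelian group, written additively, and $x_1\in G$ generates a dense cyclic subgroup; $x_n=nx_1$. $H=\ell^2(\mathbb{Z})$ with basis $\{E_l\}$, $H_+=\ell^2(\mathbb{Z}_{\ge0})$ with basis $\{E^+_k\}$; $VE_l=E_{l+1}$, $UE_k^+=E_{k+1}^+$, $M_fE_l=f(x_l)E_l$, $M^+_fE^+_k=f(x_k)E^+_k$, $\mathbb{K}E_k^+=kE_k^+$, $\mathbb{L}E_l=lE_l$, and $\alpha(\mathbb{K})E_k^+=\alpha(k)E_k^+$ for a bounded sequence $\alpha$. $A=C^*(U,M^+_f:f\in C(G))$, $B=C^*(V,M_f:f\in C(G))$. $\rho^{\mathbb K}_\theta(a)=e^{i\theta\mathbb{K}}ae^{-i\theta\mathbb{K}}$ and $\rho^{\mathbb L}_\theta(b)=e^{i\theta\mathbb{L}}be^{-i\theta\mathbb{L}}$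 for $\theta\in\mathbb R$ (these preserve $A$ and $B$ respectively). *)

theory Defs
  imports "HOL-Analysis.Analysis"
begin

text \<open>Bounded operators on l2(I) (I = int or nat) are represented by their matrices
  m i j = <E_i, T E_j>.  Everything below is expressed on matrices.\<close>

type_synonym 'i mat = "'i \<Rightarrow> 'i \<Rightarrow> complex"

definition bilin_vals :: "'i mat \<Rightarrow> real set" where
  "bilin_vals m = {cmod (\<Sum>i\<in>F. \<Sum>j\<in>F. cnj (y i) * m i j * x j) | F x y.
      finite F \<and> (\<Sum>j\<in>F. (cmod (x j))\<^sup>2) \<le> 1 \<and> (\<Sum>i\<in>F. (cmod (y i))\<^sup>2) \<le> 1}"

definition bounded_mat :: "'i mat \<Rightarrow> bool" where
  "bounded_mat m \<longleftrightarrow> bdd_above (bilin_vals m)"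

definition opnorm :: "'i mat \<Rightarrow> real" where
  "opnorm m = Sup (bilin_vals m)"

definition mat_add :: "'i mat \<Rightarrow> 'i mat \<Rightarrow> 'i mat" where
  "mat_add a b = (\<lambda>i j. a i j + b i j)"

definition mat_scale :: "complex \<Rightarrow> 'i mat \<Rightarrow> 'i mat" where
  "mat_scale c a = (\<lambda>i j. c * a i j)"

definition mat_mult :: "'i mat \<Rightarrow> 'i mat \<Rightarrow> 'i mat" where
  "mat_mult a b = (\<lambda>i j. infsum (\<lambda>k. a i k * b k j) UNIV)"

definition mat_adj :: "'i mat \<Rightarrow> 'i mat" where
  "mat_adj a = (\<lambda>i j. cnj (a j i))"

definition diag_mat :: "('i \<Rightarrow> complex) \<Rightarrow> 'i mat" where
  "diag_mat d = (\<lambda>i j. if i = j then d i else 0)"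

definition mat_id :: "'i mat" where
  "mat_id = diag_mat (\<lambda>_. 1)"

primrec mat_pow :: "'i mat \<Rightarrow> nat \<Rightarrow> 'i mat" where
  "mat_pow m 0 = mat_id"
| "mat_pow m (Suc n) = mat_mult m (mat_pow m n)"

inductive_set cstar_gen :: "'i mat set \<Rightarrow> 'i mat set" for S where
  gen: "a \<in> S \<Longrightarrow> a \<in> cstar_gen S"
| add: "a \<in> cstar_gen S \<Longrightarrow> b \<in> cstar_gen S \<Longrightarrow> mat_add a b \<in> cstar_gen S"
| scale: "a \<in> cstar_gen S \<Longrightarrow> mat_scale c a \<in> cstar_gen S"
| mult: "a \<in> cstar_gen S \<Longrightarrow> b \<in> cstar_gen S \<Longrightarrow> mat_mult a b \<in> cstar_gen S"
| adj: "a \<in> cstar_gen S \<Longrightarrow> mat_adj a \<in> cstar_gen S"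
| lim: "(\<And>k. s k \<in> cstar_gen S) \<Longrightarrow> bounded_mat m \<Longrightarrow>
        (\<lambda>k. opnorm (\<lambda>i j. s k i j - m i j)) \<longlonglongrightarrow> 0 \<Longrightarrow> m \<in> cstar_gen S"

definition intmul :: "int \<Rightarrow> 'a::ab_group_add \<Rightarrow> 'a" where
  "intmul n x = (if n \<ge> 0 then (\<Sum>i<nat n. x) else - (\<Sum>i<nat (-n). x))"

definition shiftV :: "int mat" where
  "shiftV = (\<lambda>i j. if i = j + 1 then 1 else 0)"

definition shiftU :: "nat mat" where
  "shiftU = (\<lambda>i j. if i = j + 1 then 1 else 0)"

definition multM :: "'g::ab_group_add \<Rightarrow> ('g \<Rightarrow> complex) \<Rightarrow> int mat" where
  "multM x1 f = diag_mat (\<lambda>l. f (intmul l x1))"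

definition multMp :: "'g::ab_group_add \<Rightarrow> ('g \<Rightarrow> complex) \<Rightarrow> nat mat" where
  "multMp x1 f = diag_mat (\<lambda>k. f (intmul (int k) x1))"

definition alg_A :: "'g::{topological_ab_group_add} \<Rightarrow> nat mat set" where
  "alg_A x1 = cstar_gen (insert shiftU {multMp x1 f | f. continuous_on UNIV f})"

definition alg_B :: "'g::{topological_ab_group_add} \<Rightarrow> int mat set" where
  "alg_B x1 = cstar_gen (insert shiftV {multM x1 f | f. continuous_on UNIV f})"

text \<open>Gauge actions rho_theta(a) = e^{i theta K} a e^{-i theta K} (resp. with L).\<close>

definition rhoK :: "real \<Rightarrow> nat mat \<Rightarrow> nat mat" where
  "rhoK \<theta> a = mat_mult (mat_mult (diag_mat (\<lambda>k. cis (\<theta> * real k))) a)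
                        (diag_mat (\<lambda>k. cis (- \<theta> * real k)))"

definition rhoL :: "real \<Rightarrow> int mat \<Rightarrow> int mat" where
  "rhoL \<theta> b = mat_mult (mat_mult (diag_mat (\<lambda>l. cis (\<theta> * real_of_int l))) b)
                        (diag_mat (\<lambda>l. cis (- \<theta> * real_of_int l)))"

definition spectral_A :: "'g::{topological_ab_group_add} \<Rightarrow> int \<Rightarrow> nat mat set" where
  "spectral_A x1 n = {a \<in> alg_A x1. \<forall>\<theta>::real. rhoK \<theta> a = mat_scale (cis (real_of_int n * \<theta>)) a}"

definition spectral_B :: "'g::{topological_ab_group_add} \<Rightarrow> int \<Rightarrow> int mat set" where
  "spectral_B x1 n = {b \<in> alg_B x1. \<forall>\<theta>::real. rhoL \<theta> b = mat_scale (cis (real_of_int n * \<theta>)) b}"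

end

theory Submission
  imports Defs
begin


abbreviation bf :: "'i mat \<Rightarrow> 'i set \<Rightarrow> ('i \<Rightarrow> complex) \<Rightarrow> ('i \<Rightarrow> complex) \<Rightarrow> real" where
  "bf m F x y \<equiv> cmod (\<Sum>i\<in>F. \<Sum>j\<in>F. cnj (y i) * m i j * x j)"

abbreviation nsq :: "'i set \<Rightarrow> ('i \<Rightarrow> complex) \<Rightarrow> real" where
  "nsq F x \<equiv> (\<Sum>j\<in>F. (cmod (x j))\<^sup>2)"

lemma bilin_vals_0: "0 \<in> bilin_vals m"
  unfolding bilin_vals_def by (rule CollectI, rule exI[of _ "{}"]) auto

lemma bilin_le:
  assumes "bounded_mat m" "finite F" "nsq F x \<le> 1" "nsq F y \<le> 1"
  shows "bf m F x y \<le> opnorm m"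
  unfolding opnorm_def
  by (rule cSup_upper) (use assms in \<open>auto simp: bilin_vals_def bounded_mat_def\<close>)

lemma opnorm_nonneg: "bounded_mat m \<Longrightarrow> 0 \<le> opnorm m"
  unfolding opnorm_def using bilin_vals_0 by (rule cSup_upper2) (auto simp: bounded_mat_def)

lemma opnorm_leI:
  assumes "\<And>F x y. finite F \<Longrightarrow> nsq F x \<le> 1 \<Longrightarrow> nsq F y \<le> 1 \<Longrightarrow> bf m F x y \<le> C"
  shows "bounded_mat m" "opnorm m \<le> C"
proof -
  have *: "\<And>v. v \<in> bilin_vals m \<Longrightarrow> v \<le> C" using assms unfolding bilin_vals_def by blast
  show "bounded_mat m" unfolding bounded_mat_def bdd_above_def using * by blast
  show "opnorm m \<le> C" unfolding opnorm_def using bilin_vals_0 * by (intro cSup_least) auto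
qed

lemma entry_le:
  assumes "bounded_mat m"
  shows "cmod (m i j) \<le> opnorm m"
proof -
  let ?x = "\<lambda>k. if k = j then (1::complex) else 0"
  let ?y = "\<lambda>k. if k = i then (1::complex) else 0"
  have a: "nsq {i,j} ?x \<le> 1" "nsq {i,j} ?y \<le> 1"
    by (cases "i = j"; simp)+
  have "bf m {i,j} ?x ?y = cmod (m i j)"
    by (cases "i = j") (simp_all add: if_distrib sum.If_cases cong: if_cong)
  with bilin_le[OF assms _ a] show ?thesis by simp
qed

lemma bf_add: "bf (mat_add a b) F x y \<le> bf a F x y + bf b F x y"
proof -
  have "(\<Sum>i\<in>F. \<Sum>j\<in>F. cnj (y i) * mat_add a b i j * x j) =
        (\<Sum>i\<in>F. \<Sum>j\<in>F. cnj (y i) * a i j * x j) + (\<Sum>i\<in>F. \<Sum>j\<in>F. cnj (y i) * b i j * x j)"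
    by (simp add: mat_add_def algebra_simps sum.distrib)
  then show ?thesis by (simp add: norm_triangle_ineq)
qed

lemma opnorm_add:
  fixes a b :: "'i mat"
  assumes "bounded_mat a" "bounded_mat b"
  shows "bounded_mat (mat_add a b)" "opnorm (mat_add a b) \<le> opnorm a + opnorm b"
proof -
  have "\<And>F x y. finite F \<Longrightarrow> nsq F x \<le> 1 \<Longrightarrow> nsq F y \<le> 1 \<Longrightarrow> bf (mat_add a b) F x y \<le> opnorm a + opnorm b"
  proof -
    fix F :: "'i set" and x y :: "'i \<Rightarrow> complex" assume h: "finite F" "nsq F x \<le> 1" "nsq F y \<le> 1"
    show "bf (mat_add a b) F x y \<le> opnorm a + opnorm b"
      using bf_add[where a=a and b=b and F=F and x=x and y=y] bilin_le[OF assms(1) h] bilin_le[OF assms(2) h] by linarith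
  qed
  from opnorm_leI[OF this] show "bounded_mat (mat_add a b)" "opnorm (mat_add a b) \<le> opnorm a + opnorm b" by auto
qed

lemma bf_scale: "bf (mat_scale c a) F x y = cmod c * bf a F x y"
proof -
  have "(\<Sum>i\<in>F. \<Sum>j\<in>F. cnj (y i) * mat_scale c a i j * x j) = c * (\<Sum>i\<in>F. \<Sum>j\<in>F. cnj (y i) * a i j * x j)"
    by (simp add: mat_scale_def sum_distrib_left algebra_simps)
  then show ?thesis by (simp add: norm_mult)
qed

lemma opnorm_scale:
  fixes a :: "'i mat"
  assumes "bounded_mat a"
  shows "bounded_mat (mat_scale c a)" "opnorm (mat_scale c a) \<le> cmod c * opnorm a"
proof -
  have "\<And>F x y. finite F \<Longrightarrow> nsq F x \<le> 1 \<Longrightarrow> nsq F y \<le> 1 \<Longrightarrow> bf (mat_scale c a) F x y \<le> cmod c * opnorm a"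
  proof -
    fix F :: "'i set" and x y :: "'i \<Rightarrow> complex" assume h: "finite F" "nsq F x \<le> 1" "nsq F y \<le> 1"
    show "bf (mat_scale c a) F x y \<le> cmod c * opnorm a"
      using bf_scale[where c=c and a=a and F=F and x=x and y=y] bilin_le[OF assms(1) h] by (simp add: mult_left_mono)
  qed
  from opnorm_leI[OF this] show "bounded_mat (mat_scale c a)" "opnorm (mat_scale c a) \<le> cmod c * opnorm a" by auto
qed

lemma bf_adj: "bf (mat_adj a) F x y = bf a F y x"
proof -
  have "(\<Sum>i\<in>F. \<Sum>j\<in>F. cnj (y i) * mat_adj a i j * x j) = (\<Sum>i\<in>F. \<Sum>j\<in>F. cnj (cnj (x j) * a j i * y i))"
    by (simp add: mat_adj_def mult_ac)
  also have "\<dots> = cnj (\<Sum>j\<in>F. \<Sum>i\<in>F. cnj (x j) * a j i * y i)"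
    by (subst sum.swap) (simp only: cnj_sum)
  finally show ?thesis by (simp only: complex_mod_cnj)
qed

lemma opnorm_adj:
  fixes a :: "'i mat"
  assumes "bounded_mat a"
  shows "bounded_mat (mat_adj a)" "opnorm (mat_adj a) \<le> opnorm a"
proof -
  have "\<And>F x y. finite F \<Longrightarrow> nsq F x \<le> 1 \<Longrightarrow> nsq F y \<le> 1 \<Longrightarrow> bf (mat_adj a) F x y \<le> opnorm a"
  proof -
    fix F :: "'i set" and x y :: "'i \<Rightarrow> complex" assume h: "finite F" "nsq F x \<le> 1" "nsq F y \<le> 1"
    show "bf (mat_adj a) F x y \<le> opnorm a"
      using bf_adj[where a=a and F=F and x=x and y=y] bilin_le[OF assms(1) h(1,3,2)] by simp
  qed
  from opnorm_leI[OF this] show "bounded_mat (mat_adj a)" "opnorm (mat_adj a) \<le> opnorm a" by auto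
qed

lemma sum_if_sub:
  assumes "finite H" "S \<subseteq> H" shows "(\<Sum>k\<in>H. if k \<in> S then f k else 0) = sum f S"
proof -
  have "sum f (H \<inter> S) = (\<Sum>k\<in>H. if k \<in> S then f k else 0)" by (rule sum.inter_restrict[OF assms(1)])
  moreover have "H \<inter> S = S" using assms(2) by blast
  ultimately show ?thesis by simp
qed

lemma cnj_div_mult: "cnj (v / complex_of_real r) * v = complex_of_real ((cmod v)\<^sup>2 / r)"
proof -
  have "cnj (v / complex_of_real r) * v = (v * cnj v) / complex_of_real r" by (simp add: field_simps)
  also have "\<dots> = complex_of_real ((cmod v)\<^sup>2 / r)" by (simp add: complex_norm_square[symmetric])
  finally show ?thesis .
qed

lemma cnj_mult_self: "cnj z * z = (complex_of_real (cmod z))\<^sup>2"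
  by (metis complex_norm_square mult.commute of_real_power)

lemma col_bound:
  assumes m: "bounded_mat m" and F: "finite F" and G: "finite G" and x: "nsq F x \<le> 1"
  shows "(\<Sum>k\<in>G. (cmod (\<Sum>j\<in>F. m k j * x j))\<^sup>2) \<le> (opnorm m)\<^sup>2"
proof -
  define v where "v k = (\<Sum>j\<in>F. m k j * x j)" for k
  define r where "r = sqrt (\<Sum>k\<in>G. (cmod (v k))\<^sup>2)"
  have r0: "r \<ge> 0" unfolding r_def by (simp add: sum_nonneg)
  have rsq: "r\<^sup>2 = (\<Sum>k\<in>G. (cmod (v k))\<^sup>2)" unfolding r_def by (simp add: sum_nonneg)
  show ?thesis
  proof (cases "r = 0")
    case True then show ?thesis using rsq v_def by simp
  next
    case False
    then have rp: "r > 0" using r0 by simp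
    define y where "y k = (if k \<in> G then v k / of_real r else 0)" for k
    define x' where "x' k = (if k \<in> F then x k else 0)" for k
    define H where "H = F \<union> G"
    have H: "finite H" "F \<subseteq> H" "G \<subseteq> H" using F G by (auto simp: H_def)
    have "nsq H x' = (\<Sum>k\<in>H. if k \<in> F then (cmod (x k))\<^sup>2 else 0)"
      by (rule sum.cong) (auto simp: x'_def)
    also have "\<dots> = nsq F x" using H by (simp add: sum_if_sub)
    finally have nx: "nsq H x' \<le> 1" using x by simp
    have "nsq H y = (\<Sum>k\<in>H. if k \<in> G then (cmod (v k))\<^sup>2 / r\<^sup>2 else 0)"
      by (rule sum.cong) (auto simp: y_def norm_divide power_divide)
    also have "\<dots> = (\<Sum>k\<in>G. (cmod (v k))\<^sup>2 / r\<^sup>2)" using H by (simp add: sum_if_sub)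
    also have "\<dots> = 1" using rp by (simp add: sum_divide_distrib[symmetric] rsq[symmetric])
    finally have ny: "nsq H y \<le> 1" by simp
    have inner: "(\<Sum>j\<in>H. cnj (y i) * m i j * x' j) = cnj (y i) * v i" for i
    proof -
      have "(\<Sum>j\<in>H. cnj (y i) * m i j * x' j) = (\<Sum>j\<in>H. if j \<in> F then cnj (y i) * m i j * x j else 0)"
        by (rule sum.cong) (auto simp: x'_def)
      also have "\<dots> = (\<Sum>j\<in>F. cnj (y i) * m i j * x j)" using H by (simp add: sum_if_sub)
      finally show ?thesis by (simp add: v_def sum_distrib_left algebra_simps)
    qed
    have "(\<Sum>i\<in>H. \<Sum>j\<in>H. cnj (y i) * m i j * x' j) = (\<Sum>i\<in>H. cnj (y i) * v i)"
      by (simp add: inner)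
    also have "\<dots> = (\<Sum>i\<in>H. if i \<in> G then of_real ((cmod (v i))\<^sup>2 / r) else 0)"
      by (rule sum.cong) (auto simp: y_def cnj_mult_self)
    also have "\<dots> = of_real (\<Sum>i\<in>G. (cmod (v i))\<^sup>2 / r)" using H by (simp add: sum_if_sub)
    also have "\<dots> = of_real r"
    proof -
      have "(\<Sum>i\<in>G. (cmod (v i))\<^sup>2 / r) = r\<^sup>2 / r" by (simp add: sum_divide_distrib[symmetric] rsq)
      also have "\<dots> = r" using rp by (simp add: power2_eq_square)
      finally show ?thesis by simp
    qed
    finally have "bf m H x' y = r" using r0 by simp
    with bilin_le[OF m H(1) nx ny] have "r \<le> opnorm m" by simp
    then have "r\<^sup>2 \<le> (opnorm m)\<^sup>2" using r0 by (simp add: power_mono)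
    then show ?thesis using rsq v_def by simp
  qed
qed

lemma col_sq:
  assumes m: "bounded_mat m" and G: "finite G"
  shows "(\<Sum>k\<in>G. (cmod (m k j))\<^sup>2) \<le> (opnorm m)\<^sup>2"
  using col_bound[OF m _ G, of "{j}" "\<lambda>_. 1"] by simp

lemma row_sq:
  assumes m: "bounded_mat m" and G: "finite G"
  shows "(\<Sum>k\<in>G. (cmod (m i k))\<^sup>2) \<le> (opnorm m)\<^sup>2"
proof -
  have "(\<Sum>k\<in>G. (cmod (m i k))\<^sup>2) = (\<Sum>k\<in>G. (cmod (mat_adj m k i))\<^sup>2)" by (simp add: mat_adj_def)
  also have "\<dots> \<le> (opnorm (mat_adj m))\<^sup>2" by (rule col_sq[OF opnorm_adj(1)[OF m] G])
  also have "\<dots> \<le> (opnorm m)\<^sup>2" using opnorm_adj[OF m] opnorm_nonneg[OF opnorm_adj(1)[OF m]] by (simp add: power_mono)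
  finally show ?thesis .
qed

lemma cs_real:
  fixes a b :: "'a \<Rightarrow> real"
  shows "(\<Sum>k\<in>G. \<bar>a k\<bar> * \<bar>b k\<bar>) \<le> sqrt (\<Sum>k\<in>G. (a k)\<^sup>2) * sqrt (\<Sum>k\<in>G. (b k)\<^sup>2)"
  using L2_set_mult_ineq[of a b G] by (simp add: L2_set_def)

lemma cs_bound:
  fixes u v :: "'a \<Rightarrow> complex"
  assumes "finite G" "(\<Sum>k\<in>G. (cmod (u k))\<^sup>2) \<le> A\<^sup>2" "(\<Sum>k\<in>G. (cmod (v k))\<^sup>2) \<le> B\<^sup>2" "A \<ge> 0" "B \<ge> 0"
  shows "(\<Sum>k\<in>G. norm (u k * v k)) \<le> A * B"
proof -
  have "(\<Sum>k\<in>G. norm (u k * v k)) = (\<Sum>k\<in>G. \<bar>cmod (u k)\<bar> * \<bar>cmod (v k)\<bar>)" by (simp add: norm_mult)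
  also have "\<dots> \<le> sqrt (\<Sum>k\<in>G. (cmod (u k))\<^sup>2) * sqrt (\<Sum>k\<in>G. (cmod (v k))\<^sup>2)" by (rule cs_real)
  also have "\<dots> \<le> sqrt (A\<^sup>2) * sqrt (B\<^sup>2)"
    using assms by (intro mult_mono real_sqrt_le_mono) (auto simp: sum_nonneg)
  finally show ?thesis using assms by simp
qed

lemma abs_summ_bound:
  fixes f :: "'a \<Rightarrow> complex"
  assumes "\<And>G. finite G \<Longrightarrow> (\<Sum>k\<in>G. norm (f k)) \<le> C"
  shows "f summable_on UNIV" "norm (infsum f UNIV) \<le> C"
proof -
  have as: "(\<lambda>x. norm (f x)) summable_on UNIV"
    by (rule nonneg_bdd_above_summable_on) (use assms in \<open>auto simp: bdd_above_def\<close>)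
  then show "f summable_on UNIV" by (rule abs_summable_summable)
  have "norm (infsum f UNIV) \<le> infsum (\<lambda>x. norm (f x)) UNIV" by (rule norm_infsum_bound[OF as])
  also have "\<dots> \<le> C" by (rule infsum_le_finite_sums[OF as]) (use assms in auto)
  finally show "norm (infsum f UNIV) \<le> C" .
qed



lemma mult_summable:
  assumes a: "bounded_mat a" and b: "bounded_mat b"
  shows "(\<lambda>k. a i k * b k j) summable_on UNIV"
proof (rule abs_summ_bound(1))
  fix G :: "'a set" assume G: "finite G"
  show "(\<Sum>k\<in>G. norm (a i k * b k j)) \<le> opnorm a * opnorm b"
    by (rule cs_bound[OF G row_sq[OF a G] col_sq[OF b G] opnorm_nonneg[OF a] opnorm_nonneg[OF b]])
qed

lemma infsum_sum_fin:
  fixes f :: "'a \<Rightarrow> 'b \<Rightarrow> complex"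
  assumes "finite F" "\<And>i. i \<in> F \<Longrightarrow> f i summable_on A"
  shows "(\<lambda>k. \<Sum>i\<in>F. f i k) summable_on A \<and> (\<Sum>i\<in>F. infsum (f i) A) = infsum (\<lambda>k. \<Sum>i\<in>F. f i k) A"
  using assms
proof (induction F rule: finite_induct)
  case empty then show ?case by simp
next
  case (insert x F)
  then have IH: "(\<lambda>k. \<Sum>i\<in>F. f i k) summable_on A" "(\<Sum>i\<in>F. infsum (f i) A) = infsum (\<lambda>k. \<Sum>i\<in>F. f i k) A"
    by auto
  have fx: "f x summable_on A" using insert by auto
  have "infsum (\<lambda>k. f x k + (\<Sum>i\<in>F. f i k)) A = infsum (f x) A + infsum (\<lambda>k. \<Sum>i\<in>F. f i k) A"
    by (rule infsum_add[OF fx IH(1)])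
  then show ?case using insert(1,2) IH fx
    by (simp add: summable_on_add)
qed

lemma opnorm_mult:
  fixes a b :: "'i mat"
  assumes a: "bounded_mat a" and b: "bounded_mat b"
  shows "bounded_mat (mat_mult a b)" "opnorm (mat_mult a b) \<le> opnorm a * opnorm b"
proof -
  have "bf (mat_mult a b) F x y \<le> opnorm a * opnorm b"
    if F: "finite F" and x: "nsq F x \<le> 1" and y: "nsq F y \<le> 1" for F x y
  proof -
    define u where "u k = (\<Sum>i\<in>F. cnj (y i) * a i k)" for k
    define v where "v k = (\<Sum>j\<in>F. b k j * x j)" for k
    have s1: "cnj (y i) * mat_mult a b i j * x j = infsum (\<lambda>k. cnj (y i) * (a i k * b k j) * x j) UNIV" for i j
    proof -
      have sm: "(\<lambda>k. a i k * b k j) summable_on UNIV" by (rule mult_summable[OF a b])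
      have "cnj (y i) * mat_mult a b i j = infsum (\<lambda>k. cnj (y i) * (a i k * b k j)) UNIV"
        unfolding mat_mult_def by (rule infsum_cmult_right[symmetric]) (use sm in auto)
      moreover have "infsum (\<lambda>k. cnj (y i) * (a i k * b k j)) UNIV * x j = infsum (\<lambda>k. cnj (y i) * (a i k * b k j) * x j) UNIV"
        by (rule infsum_cmult_left[symmetric]) (use sm summable_on_cmult_right in auto)
      ultimately show ?thesis by simp
    qed
    have sm2: "(\<lambda>k. cnj (y i) * (a i k * b k j) * x j) summable_on UNIV" for i j
      using mult_summable[OF a b] summable_on_cmult_right summable_on_cmult_left by blast
    have inner: "(\<lambda>k. \<Sum>j\<in>F. cnj (y i) * (a i k * b k j) * x j) summable_on UNIV \<and>
        (\<Sum>j\<in>F. cnj (y i) * mat_mult a b i j * x j) = infsum (\<lambda>k. \<Sum>j\<in>F. cnj (y i) * (a i k * b k j) * x j) UNIV" for i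
      using infsum_sum_fin[OF F, of "\<lambda>j k. cnj (y i) * (a i k * b k j) * x j" UNIV] sm2 s1 by simp
    have "(\<Sum>i\<in>F. \<Sum>j\<in>F. cnj (y i) * mat_mult a b i j * x j) =
          infsum (\<lambda>k. \<Sum>i\<in>F. \<Sum>j\<in>F. cnj (y i) * (a i k * b k j) * x j) UNIV"
      using infsum_sum_fin[OF F, of "\<lambda>i k. \<Sum>j\<in>F. cnj (y i) * (a i k * b k j) * x j" UNIV] inner by simp
    also have "\<dots> = infsum (\<lambda>k. u k * v k) UNIV"
      by (rule infsum_cong) (simp only: u_def v_def sum_product, simp add: mult_ac)
    finally have eq: "(\<Sum>i\<in>F. \<Sum>j\<in>F. cnj (y i) * mat_mult a b i j * x j) = infsum (\<lambda>k. u k * v k) UNIV" .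
    have ba: "bounded_mat (mat_adj a)" "opnorm (mat_adj a) \<le> opnorm a" using opnorm_adj[OF a] by auto
    have "norm (infsum (\<lambda>k. u k * v k) UNIV) \<le> opnorm a * opnorm b"
    proof (rule abs_summ_bound(2))
      fix G :: "'i set" assume G: "finite G"
      have "(\<Sum>k\<in>G. (cmod (u k))\<^sup>2) = (\<Sum>k\<in>G. (cmod (\<Sum>i\<in>F. mat_adj a k i * y i))\<^sup>2)"
      proof (rule sum.cong)
        fix k
        have "u k = cnj (\<Sum>i\<in>F. mat_adj a k i * y i)" by (simp add: u_def mat_adj_def mult.commute)
        then show "(cmod (u k))\<^sup>2 = (cmod (\<Sum>i\<in>F. mat_adj a k i * y i))\<^sup>2" by (simp only: complex_mod_cnj)
      qed simp
      also have "\<dots> \<le> (opnorm (mat_adj a))\<^sup>2" by (rule col_bound[OF ba(1) F G y])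
      also have "\<dots> \<le> (opnorm a)\<^sup>2" using ba opnorm_nonneg[OF ba(1)] by (simp add: power_mono)
      finally have uu: "(\<Sum>k\<in>G. (cmod (u k))\<^sup>2) \<le> (opnorm a)\<^sup>2" .
      have vv: "(\<Sum>k\<in>G. (cmod (v k))\<^sup>2) \<le> (opnorm b)\<^sup>2" unfolding v_def by (rule col_bound[OF b F G x])
      show "(\<Sum>k\<in>G. norm (u k * v k)) \<le> opnorm a * opnorm b"
        by (rule cs_bound[OF G uu vv opnorm_nonneg[OF a] opnorm_nonneg[OF b]])
    qed
    with eq show ?thesis by simp
  qed
  from opnorm_leI[of "mat_mult a b", OF this]
  show "bounded_mat (mat_mult a b)" "opnorm (mat_mult a b) \<le> opnorm a * opnorm b" by auto
qed



definition mdiff :: "'i mat \<Rightarrow> 'i mat \<Rightarrow> 'i mat" where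
  "mdiff a b = (\<lambda>i j. a i j - b i j)"

lemma mdiff_as: "mdiff a b = mat_add a (mat_scale (-1) b)"
  by (simp add: mdiff_def mat_add_def mat_scale_def)

lemma opnorm_mdiff:
  fixes a b :: "'i mat"
  assumes "bounded_mat a" "bounded_mat b"
  shows "bounded_mat (mdiff a b)" "opnorm (mdiff a b) \<le> opnorm a + opnorm b"
proof -
  have s: "bounded_mat (mat_scale (-1) b)" "opnorm (mat_scale (-1) b) \<le> opnorm b"
    using opnorm_scale[OF assms(2), of "-1"] by auto
  show "bounded_mat (mdiff a b)" unfolding mdiff_as using opnorm_add[OF assms(1) s(1)] by auto
  show "opnorm (mdiff a b) \<le> opnorm a + opnorm b" unfolding mdiff_as using opnorm_add[OF assms(1) s(1)] s(2) by auto
qed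

lemma opnorm_mdiff_sym:
  fixes a b :: "'i mat"
  assumes "bounded_mat a" "bounded_mat b"
  shows "opnorm (mdiff a b) = opnorm (mdiff b a)"
proof -
  have e: "mdiff b a = mat_scale (-1) (mdiff a b)" "mdiff a b = mat_scale (-1) (mdiff b a)"
    by (auto simp: mdiff_def mat_scale_def)
  show ?thesis
    using opnorm_scale[OF opnorm_mdiff(1)[OF assms], of "-1"] opnorm_scale[OF opnorm_mdiff(1)[OF assms(2,1)], of "-1"]
    by (simp add: e[symmetric])
qed

lemma opnorm_tri:
  fixes a b c :: "'i mat"
  assumes "bounded_mat a" "bounded_mat b" "bounded_mat c"
  shows "opnorm (mdiff a c) \<le> opnorm (mdiff a b) + opnorm (mdiff b c)"
proof -
  have "mdiff a c = mat_add (mdiff a b) (mdiff b c)" by (auto simp: mdiff_def mat_add_def)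
  then show ?thesis using opnorm_add[OF opnorm_mdiff(1)[OF assms(1,2)] opnorm_mdiff(1)[OF assms(2,3)]] by simp
qed

lemma opnorm_le_diff:
  fixes a b :: "'i mat"
  assumes "bounded_mat a" "bounded_mat b"
  shows "opnorm a \<le> opnorm b + opnorm (mdiff a b)"
proof -
  have "a = mat_add b (mdiff a b)" by (auto simp: mdiff_def mat_add_def)
  then show ?thesis using opnorm_add[OF assms(2) opnorm_mdiff(1)[OF assms]] by simp
qed

lemma infsum_diff':
  fixes f g :: "'a \<Rightarrow> complex"
  assumes "f summable_on A" "g summable_on A"
  shows "infsum (\<lambda>x. f x - g x) A = infsum f A - infsum g A"
proof -
  have "infsum (\<lambda>x. f x + - g x) A = infsum f A + infsum (\<lambda>x. - g x) A"
    by (rule infsum_add[OF assms(1)]) (simp add: summable_on_uminus assms(2))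
  then show ?thesis by (simp add: infsum_uminus)
qed

lemma mult_mdiff:
  fixes a a' b b' :: "'i mat"
  assumes a: "bounded_mat a" and a': "bounded_mat a'" and b: "bounded_mat b" and b': "bounded_mat b'"
  shows "mdiff (mat_mult a b) (mat_mult a' b') = mat_add (mat_mult a (mdiff b b')) (mat_mult (mdiff a a') b')"
proof (intro ext)
  fix i j
  have 1: "mat_mult a (mdiff b b') i j = mat_mult a b i j - mat_mult a b' i j"
    unfolding mat_mult_def mdiff_def
    by (simp add: right_diff_distrib infsum_diff' mult_summable[OF a b] mult_summable[OF a b'])
  have 2: "mat_mult (mdiff a a') b' i j = mat_mult a b' i j - mat_mult a' b' i j"
    unfolding mat_mult_def mdiff_def
    by (simp add: left_diff_distrib infsum_diff' mult_summable[OF a b'] mult_summable[OF a' b'])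
  show "mdiff (mat_mult a b) (mat_mult a' b') i j = mat_add (mat_mult a (mdiff b b')) (mat_mult (mdiff a a') b') i j"
    unfolding mat_add_def 1 2 by (simp add: mdiff_def)
qed

definition approx :: "('i mat \<Rightarrow> bool) \<Rightarrow> 'i mat \<Rightarrow> bool" where
  "approx P m \<longleftrightarrow> bounded_mat m \<and> (\<forall>e>0. \<exists>b. P b \<and> bounded_mat b \<and> opnorm (mdiff m b) < e)"

lemma cstar_approx:
  fixes S :: "'i mat set"
  assumes gen: "\<And>g. g \<in> S \<Longrightarrow> approx P g"
    and Padd: "\<And>a b. P a \<Longrightarrow> P b \<Longrightarrow> P (mat_add a b)"
    and Pscale: "\<And>a c. P a \<Longrightarrow> P (mat_scale c a)"
    and Pmult: "\<And>a b. P a \<Longrightarrow> P b \<Longrightarrow> P (mat_mult a b)"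
    and Padj: "\<And>a. P a \<Longrightarrow> P (mat_adj a)"
  shows "m \<in> cstar_gen S \<Longrightarrow> approx P m"
proof (induction m rule: cstar_gen.induct)
  case (gen a) then show ?case by (rule assms)
next
  case (add a b)
  have ba: "bounded_mat a" and bb: "bounded_mat b" using add.IH by (auto simp: approx_def)
  show ?case unfolding approx_def
  proof (intro conjI allI impI)
    show "bounded_mat (mat_add a b)" by (rule opnorm_add(1)[OF ba bb])
    fix e :: real assume e: "e > 0"
    obtain a' where a': "P a'" "bounded_mat a'" "opnorm (mdiff a a') < e/2"
      using add.IH(1) e unfolding approx_def by (meson half_gt_zero)
    obtain b' where b': "P b'" "bounded_mat b'" "opnorm (mdiff b b') < e/2"
      using add.IH(2) e unfolding approx_def by (meson half_gt_zero)
    have "mdiff (mat_add a b) (mat_add a' b') = mat_add (mdiff a a') (mdiff b b')"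
      by (simp add: mdiff_def mat_add_def fun_eq_iff algebra_simps)
    then have "opnorm (mdiff (mat_add a b) (mat_add a' b')) \<le> opnorm (mdiff a a') + opnorm (mdiff b b')"
      using opnorm_add(2)[OF opnorm_mdiff(1)[OF ba a'(2)] opnorm_mdiff(1)[OF bb b'(2)]] by simp
    then show "\<exists>c. P c \<and> bounded_mat c \<and> opnorm (mdiff (mat_add a b) c) < e"
      using a' b' Padd opnorm_add(1)[OF a'(2) b'(2)] by (intro exI[of _ "mat_add a' b'"]) auto
  qed
next
  case (scale a c)
  have ba: "bounded_mat a" using scale.IH by (auto simp: approx_def)
  show ?case unfolding approx_def
  proof (intro conjI allI impI)
    show "bounded_mat (mat_scale c a)" by (rule opnorm_scale(1)[OF ba])
    fix e :: real assume e: "e > 0"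
    have "cmod c + 1 > 0" by (simp add: add_nonneg_pos)
    then have d: "e / (cmod c + 1) > 0" using e by simp
    obtain a' where a': "P a'" "bounded_mat a'" "opnorm (mdiff a a') < e / (cmod c + 1)"
      using scale.IH d unfolding approx_def by meson
    have "mdiff (mat_scale c a) (mat_scale c a') = mat_scale c (mdiff a a')"
      by (auto simp: mdiff_def mat_scale_def algebra_simps)
    then have "opnorm (mdiff (mat_scale c a) (mat_scale c a')) \<le> cmod c * opnorm (mdiff a a')"
      using opnorm_scale(2)[OF opnorm_mdiff(1)[OF ba a'(2)]] by simp
    also have "\<dots> \<le> cmod c * (e / (cmod c + 1))" using a'(3) by (intro mult_left_mono) auto
    also have "\<dots> < e" using e by (simp add: field_simps add_pos_nonneg)
    finally show "\<exists>b. P b \<and> bounded_mat b \<and> opnorm (mdiff (mat_scale c a) b) < e"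
      using a' Pscale opnorm_scale(1)[OF a'(2)] by (intro exI[of _ "mat_scale c a'"]) auto
  qed
next
  case (mult a b)
  have ba: "bounded_mat a" and bb: "bounded_mat b" using mult.IH by (auto simp: approx_def)
  show ?case unfolding approx_def
  proof (intro conjI allI impI)
    show "bounded_mat (mat_mult a b)" by (rule opnorm_mult(1)[OF ba bb])
    fix e :: real assume e: "e > 0"
    define d where "d = min 1 (e / (opnorm a + opnorm b + 2))"
    have oa: "opnorm a \<ge> 0" and ob: "opnorm b \<ge> 0" using opnorm_nonneg ba bb by auto
    have d0: "d > 0" using e oa ob by (simp add: d_def)
    have d1: "d \<le> 1" and d2: "d \<le> e / (opnorm a + opnorm b + 2)" by (auto simp: d_def)
    obtain a' where a': "P a'" "bounded_mat a'" "opnorm (mdiff a a') < d"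
      using mult.IH(1) d0 unfolding approx_def by meson
    obtain b' where b': "P b'" "bounded_mat b'" "opnorm (mdiff b b') < d"
      using mult.IH(2) d0 unfolding approx_def by meson
    have ob': "opnorm b' \<le> opnorm b + d"
      using opnorm_le_diff[OF b'(2) bb] opnorm_mdiff_sym[OF bb b'(2)] b'(3) by linarith
    have m1: "bounded_mat (mdiff b b')" "bounded_mat (mdiff a a')"
      using opnorm_mdiff(1) ba bb a'(2) b'(2) by auto
    have "opnorm (mdiff (mat_mult a b) (mat_mult a' b')) \<le>
          opnorm (mat_mult a (mdiff b b')) + opnorm (mat_mult (mdiff a a') b')"
      unfolding mult_mdiff[OF ba a'(2) bb b'(2)]
      by (rule opnorm_add(2)[OF opnorm_mult(1)[OF ba m1(1)] opnorm_mult(1)[OF m1(2) b'(2)]])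
    also have "\<dots> \<le> opnorm a * opnorm (mdiff b b') + opnorm (mdiff a a') * opnorm b'"
      using opnorm_mult(2)[OF ba m1(1)] opnorm_mult(2)[OF m1(2) b'(2)] by linarith
    also have "\<dots> \<le> opnorm a * d + d * (opnorm b + d)"
      using b'(3) a'(3) ob' oa opnorm_nonneg[OF m1(2)] opnorm_nonneg[OF b'(2)] opnorm_nonneg[OF m1(1)]
      by (intro add_mono mult_mono) auto
    also have "\<dots> \<le> d * (opnorm a + opnorm b + 1)"
      using d1 d0 by (simp add: algebra_simps mult_left_mono)
    also have "\<dots> < d * (opnorm a + opnorm b + 2)" using d0 by simp
    also have "\<dots> \<le> e" using d2 oa ob by (simp add: field_simps)
    finally show "\<exists>c. P c \<and> bounded_mat c \<and> opnorm (mdiff (mat_mult a b) c) < e"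
      using a' b' Pmult opnorm_mult(1)[OF a'(2) b'(2)] by (intro exI[of _ "mat_mult a' b'"]) auto
  qed
next
  case (adj a)
  have ba: "bounded_mat a" using adj.IH by (auto simp: approx_def)
  show ?case unfolding approx_def
  proof (intro conjI allI impI)
    show "bounded_mat (mat_adj a)" by (rule opnorm_adj(1)[OF ba])
    fix e :: real assume e: "e > 0"
    obtain a' where a': "P a'" "bounded_mat a'" "opnorm (mdiff a a') < e"
      using adj.IH e unfolding approx_def by meson
    have "mdiff (mat_adj a) (mat_adj a') = mat_adj (mdiff a a')"
      by (auto simp: mdiff_def mat_adj_def)
    then have "opnorm (mdiff (mat_adj a) (mat_adj a')) < e"
      using opnorm_adj(2)[OF opnorm_mdiff(1)[OF ba a'(2)]] a'(3) by simp
    then show "\<exists>b. P b \<and> bounded_mat b \<and> opnorm (mdiff (mat_adj a) b) < e"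
      using a' Padj opnorm_adj(1)[OF a'(2)] by (intro exI[of _ "mat_adj a'"]) auto
  qed
next
  case (lim s m)
  show ?case unfolding approx_def
  proof (intro conjI allI impI)
    show "bounded_mat m" by fact
    fix e :: real assume e: "e > 0"
    have "\<forall>\<^sub>F k in sequentially. opnorm (\<lambda>i j. s k i j - m i j) < e/2"
      using order_tendstoD(2)[OF lim.hyps(3), of "e/2"] e by simp
    then obtain k where k: "opnorm (mdiff (s k) m) < e/2"
      unfolding mdiff_def by (meson eventually_sequentially order_refl)
    have bs: "bounded_mat (s k)" using lim.IH by (auto simp: approx_def)
    obtain b where b: "P b" "bounded_mat b" "opnorm (mdiff (s k) b) < e/2"
      using lim.IH[of k] e unfolding approx_def by (meson half_gt_zero)
    have "opnorm (mdiff m b) \<le> opnorm (mdiff m (s k)) + opnorm (mdiff (s k) b)"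
      by (rule opnorm_tri[OF lim.hyps(2) bs b(2)])
    also have "\<dots> < e" using k b(3) opnorm_mdiff_sym[OF lim.hyps(2) bs] by simp
    finally show "\<exists>b. P b \<and> bounded_mat b \<and> opnorm (mdiff m b) < e" using b by blast
  qed
qed



lemma nsum_add: "(\<Sum>i<(m::nat)+(n::nat). (x::'a::ab_group_add)) = (\<Sum>i<m. x) + (\<Sum>i<n. x)"
  by (induction n) (simp_all add: add.assoc)

lemma intmul_alt: "intmul n x = (\<Sum>i<nat n. x) - (\<Sum>i<nat (-n). x)"
  by (simp add: intmul_def)

lemma intmul_add: "intmul (a + b) x = intmul a x + intmul b x"
proof -
  define f where "f m = (\<Sum>i<m. x)" for m :: nat
  have fa: "f (m + n) = f m + f n" for m n unfolding f_def by (rule nsum_add)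
  have "nat (a+b) + nat (-a) + nat (-b) = nat (-(a+b)) + nat a + nat b" by linarith
  then have "f (nat (a+b) + nat (-a) + nat (-b)) = f (nat (-(a+b)) + nat a + nat b)" by simp
  then have "f (nat (a+b)) + f (nat (-a)) + f (nat (-b)) = f (nat (-(a+b))) + f (nat a) + f (nat b)"
    by (simp add: fa)
  then have "f (nat (a+b)) - f (nat (-(a+b))) = (f (nat a) - f (nat (-a))) + (f (nat b) - f (nat (-b)))"
    by (simp add: algebra_simps)
  then show ?thesis by (simp add: intmul_alt f_def)
qed

lemma intmul_0[simp]: "intmul 0 x = 0" by (simp add: intmul_def)

lemma intmul_minus: "intmul (- a) x = - intmul a x"
  using intmul_add[of a "-a" x] by (simp add: eq_neg_iff_add_eq_0 add.commute)

lemma intmul_diff: "intmul (a - b) x = intmul a x - intmul b x"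
  using intmul_add[of a "-b" x] by (simp add: intmul_minus)

locale Sctx =
  fixes x1 :: "'g::{topological_ab_group_add,t2_space}" and F :: "int filter"
  assumes cpt: "compact (UNIV :: 'g set)"
    and shiftF: "\<And>P p. eventually P F \<Longrightarrow> eventually (\<lambda>k. P (k + p)) F"
    and denseF: "\<And>P W. eventually P F \<Longrightarrow> open W \<Longrightarrow> W \<noteq> {} \<Longrightarrow> \<exists>k. P k \<and> intmul k x1 \<in> W"
begin

definition S :: "(int \<Rightarrow> complex) set" where
  "S = {s. \<exists>g. continuous_on UNIV g \<and> (\<forall>e>0. eventually (\<lambda>k. cmod (s k - g (intmul k x1)) < e) F)}"

lemma cont_bounded:
  assumes "continuous_on UNIV (g :: 'g \<Rightarrow> complex)"
  shows "\<exists>B>0. \<forall>z. cmod (g z) \<le> B"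
proof -
  have "compact (g ` UNIV)" by (rule compact_continuous_image[OF assms cpt])
  then have "bounded (g ` UNIV)" by (rule compact_imp_bounded)
  then show ?thesis unfolding bounded_pos by auto
qed

lemma S_fun: "continuous_on UNIV g \<Longrightarrow> (\<lambda>k. g (intmul k x1)) \<in> S"
  unfolding S_def by auto

lemma S_const: "(\<lambda>k. c) \<in> S"
  using S_fun[of "\<lambda>_. c"] by simp

lemma S_ev:
  assumes "eventually (\<lambda>k. s k = t k) F" "t \<in> S"
  shows "s \<in> S"
proof -
  obtain g where g: "continuous_on UNIV g" "\<forall>e>0. eventually (\<lambda>k. cmod (t k - g (intmul k x1)) < e) F"
    using assms(2) unfolding S_def by auto
  have "eventually (\<lambda>k. cmod (s k - g (intmul k x1)) < e) F" if "e > 0" for e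
    using eventually_conj[OF assms(1) g(2)[rule_format, OF that]] by (rule eventually_mono) simp
  then show ?thesis using g(1) unfolding S_def by auto
qed

lemma S_add:
  assumes "s \<in> S" "t \<in> S" shows "(\<lambda>k. s k + t k) \<in> S"
proof -
  obtain g where g: "continuous_on UNIV g" "\<forall>e>0. eventually (\<lambda>k. cmod (s k - g (intmul k x1)) < e) F"
    using assms(1) unfolding S_def by auto
  obtain h where h: "continuous_on UNIV h" "\<forall>e>0. eventually (\<lambda>k. cmod (t k - h (intmul k x1)) < e) F"
    using assms(2) unfolding S_def by auto
  have "eventually (\<lambda>k. cmod (s k + t k - (g (intmul k x1) + h (intmul k x1))) < e) F" if e: "e > 0" for e
  proof -
    have "eventually (\<lambda>k. cmod (s k - g (intmul k x1)) < e/2 \<and> cmod (t k - h (intmul k x1)) < e/2) F"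
      by (intro eventually_conj g(2)[rule_format] h(2)[rule_format]) (use e in auto)
    then show ?thesis
    proof (rule eventually_mono)
      fix k assume "cmod (s k - g (intmul k x1)) < e/2 \<and> cmod (t k - h (intmul k x1)) < e/2"
      moreover have "cmod (s k + t k - (g (intmul k x1) + h (intmul k x1))) \<le> cmod (s k - g (intmul k x1)) + cmod (t k - h (intmul k x1))"
        by (rule order_trans[OF _ norm_triangle_ineq]) (simp add: algebra_simps)
      ultimately show "cmod (s k + t k - (g (intmul k x1) + h (intmul k x1))) < e" by simp
    qed
  qed
  moreover have "continuous_on UNIV (\<lambda>z. g z + h z)" using g(1) h(1) by (intro continuous_intros)
  ultimately show ?thesis unfolding S_def by auto
qed

lemma S_mult:
  assumes "s \<in> S" "t \<in> S" shows "(\<lambda>k. s k * t k) \<in> S"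
proof -
  obtain g where g: "continuous_on UNIV g" "\<forall>e>0. eventually (\<lambda>k. cmod (s k - g (intmul k x1)) < e) F"
    using assms(1) unfolding S_def by auto
  obtain h where h: "continuous_on UNIV h" "\<forall>e>0. eventually (\<lambda>k. cmod (t k - h (intmul k x1)) < e) F"
    using assms(2) unfolding S_def by auto
  obtain B1 where B1: "B1 > 0" "\<forall>z. cmod (g z) \<le> B1" using cont_bounded[OF g(1)] by auto
  obtain B2 where B2: "B2 > 0" "\<forall>z. cmod (h z) \<le> B2" using cont_bounded[OF h(1)] by auto
  have "eventually (\<lambda>k. cmod (s k * t k - g (intmul k x1) * h (intmul k x1)) < e) F" if e: "e > 0" for e
  proof -
    define d where "d = min 1 (e / (B1 + B2 + 2))"
    have d0: "d > 0" using e B1 B2 by (simp add: d_def)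
    have d1: "d \<le> 1" and d2: "d \<le> e / (B1 + B2 + 2)" by (auto simp: d_def)
    have "eventually (\<lambda>k. cmod (s k - g (intmul k x1)) < d \<and> cmod (t k - h (intmul k x1)) < d) F"
      by (intro eventually_conj g(2)[rule_format] h(2)[rule_format]) (use d0 in auto)
    then show ?thesis
    proof (rule eventually_mono)
      fix k assume H: "cmod (s k - g (intmul k x1)) < d \<and> cmod (t k - h (intmul k x1)) < d"
      define a where "a = s k - g (intmul k x1)"
      define b where "b = t k - h (intmul k x1)"
      have tt: "cmod (t k) \<le> cmod (h (intmul k x1)) + cmod b"
        using norm_triangle_ineq[of "h (intmul k x1)" b] by (simp add: b_def)
      have tb: "cmod (t k) \<le> B2 + d"
        using tt B2(2)[rule_format, of "intmul k x1"] H unfolding b_def by linarith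
      have "s k * t k - g (intmul k x1) * h (intmul k x1) = a * t k + g (intmul k x1) * b"
        by (simp add: a_def b_def algebra_simps)
      then have "cmod (s k * t k - g (intmul k x1) * h (intmul k x1)) \<le> cmod a * cmod (t k) + cmod (g (intmul k x1)) * cmod b"
        by (metis norm_mult norm_triangle_ineq)
      also have "\<dots> \<le> d * (B2 + d) + B1 * d"
        using H tb B1 B2 d0 unfolding a_def b_def
        by (intro add_mono mult_mono) (auto simp: less_imp_le)
      also have "\<dots> \<le> d * (B1 + B2 + 1)" using d1 d0 by (simp add: algebra_simps)
      also have "\<dots> < d * (B1 + B2 + 2)" using d0 by simp
      also have "\<dots> \<le> e" using d2 B1 B2 by (simp add: field_simps)
      finally show "cmod (s k * t k - g (intmul k x1) * h (intmul k x1)) < e" .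
    qed
  qed
  moreover have "continuous_on UNIV (\<lambda>z. g z * h z)" using g(1) h(1) by (intro continuous_intros)
  ultimately show ?thesis unfolding S_def by auto
qed

lemma S_scale: "s \<in> S \<Longrightarrow> (\<lambda>k. c * s k) \<in> S"
  using S_mult[OF S_const] by blast

lemma S_zero: "(\<lambda>k. 0) \<in> S" using S_const .

lemma S_cnj:
  assumes "s \<in> S" shows "(\<lambda>k. cnj (s k)) \<in> S"
proof -
  obtain g where g: "continuous_on UNIV g" "\<forall>e>0. eventually (\<lambda>k. cmod (s k - g (intmul k x1)) < e) F"
    using assms(1) unfolding S_def by auto
  have "eventually (\<lambda>k. cmod (cnj (s k) - cnj (g (intmul k x1))) < e) F" if "e > 0" for e
    using g(2)[rule_format, OF that] by (rule eventually_mono) (metis complex_cnj_diff complex_mod_cnj)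
  moreover have "continuous_on UNIV (\<lambda>z. cnj (g z))" using g(1) by (intro continuous_intros)
  ultimately show ?thesis unfolding S_def by auto
qed

lemma S_shift:
  assumes "s \<in> S" shows "(\<lambda>k. s (k + p)) \<in> S"
proof -
  obtain g where g: "continuous_on UNIV g" "\<forall>e>0. eventually (\<lambda>k. cmod (s k - g (intmul k x1)) < e) F"
    using assms(1) unfolding S_def by auto
  have "eventually (\<lambda>k. cmod (s (k + p) - g (intmul k x1 + intmul p x1)) < e) F" if "e > 0" for e
    using shiftF[OF g(2)[rule_format, OF that], of p] by (simp add: intmul_add)
  moreover have "continuous_on UNIV (\<lambda>z. g (z + intmul p x1))"
    using g(1) by (intro continuous_on_compose2[OF g(1)] continuous_intros) auto
  ultimately show ?thesis unfolding S_def by auto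
qed

lemma S_sum:
  assumes "finite P" "\<And>p. p \<in> P \<Longrightarrow> f p \<in> S"
  shows "(\<lambda>k. \<Sum>p\<in>P. f p k) \<in> S"
  using assms
proof (induction P rule: finite_induct)
  case empty then show ?case by (simp add: S_zero)
next
  case (insert x P)
  then have "(\<lambda>k. f x k + (\<Sum>p\<in>P. f p k)) \<in> S" by (intro S_add) auto
  then show ?case using insert by simp
qed

lemma tri2: "cmod ((a::complex) - c) \<le> cmod (a - b) + cmod (b - c)"
proof -
  have "a - c = (a - b) + (b - c)" by simp
  then show ?thesis by (metis norm_triangle_ineq)
qed

lemma tri3: "cmod ((a::complex) - d) \<le> cmod (a - b) + cmod (b - c) + cmod (c - d)"
  using tri2[where a=a and b=b and c=d] tri2[where a=b and b=c and c=d] by linarith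

lemma g_close:
  assumes gk: "continuous_on UNIV gk" "\<forall>e>0. eventually (\<lambda>j. cmod (sk j - gk (intmul j x1)) < e) F"
    and gl: "continuous_on UNIV gl" "\<forall>e>0. eventually (\<lambda>j. cmod (sl j - gl (intmul j x1)) < e) F"
    and d: "\<forall>j. cmod (sk j - sl j) \<le> d"
  shows "cmod (gk z - gl z) \<le> d"
proof (rule ccontr)
  assume "\<not> ?thesis"
  then have gt: "cmod (gk z - gl z) > d" by simp
  define \<eta> where "\<eta> = (cmod (gk z - gl z) - d) / 5"
  have \<eta>: "\<eta> > 0" using gt by (simp add: \<eta>_def)
  define W where "W = (gk -` ball (gk z) \<eta> \<inter> UNIV) \<inter> (gl -` ball (gl z) \<eta> \<inter> UNIV)"
  have "open W" unfolding W_def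
    using gk(1) gl(1) continuous_on_open_vimage[OF open_UNIV] by (intro open_Int) auto
  moreover have "z \<in> W" using \<eta> by (simp add: W_def)
  moreover have "eventually (\<lambda>j. cmod (sk j - gk (intmul j x1)) < \<eta> \<and> cmod (sl j - gl (intmul j x1)) < \<eta>) F"
    using \<eta> by (intro eventually_conj gk(2)[rule_format] gl(2)[rule_format])
  ultimately obtain j where j: "cmod (sk j - gk (intmul j x1)) < \<eta>" "cmod (sl j - gl (intmul j x1)) < \<eta>"
      "intmul j x1 \<in> W"
    using denseF by blast
  have w: "cmod (gk z - gk (intmul j x1)) < \<eta>" "cmod (gl (intmul j x1) - gl z) < \<eta>"
    using j(3) by (auto simp: W_def dist_norm norm_minus_commute)
  have "cmod (gk z - gl z) \<le> cmod (gk z - gk (intmul j x1)) + cmod (gk (intmul j x1) - gl (intmul j x1)) + cmod (gl (intmul j x1) - gl z)"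
    by (rule tri3)
  moreover have "cmod (gk (intmul j x1) - gl (intmul j x1)) \<le> cmod (gk (intmul j x1) - sk j) + cmod (sk j - sl j) + cmod (sl j - gl (intmul j x1))"
    by (rule tri3)
  moreover have "cmod (gk (intmul j x1) - sk j) < \<eta>" using j(1) by (simp add: norm_minus_commute)
  ultimately have "cmod (gk z - gl z) < 4 * \<eta> + d" using w j(2) d[rule_format, of j] by linarith
  then show False using gt unfolding \<eta>_def by (simp add: field_simps)
qed

lemma S_closed:
  fixes s :: "nat \<Rightarrow> int \<Rightarrow> complex"
  assumes sk: "\<And>k. s k \<in> S" and unif: "\<And>e. e > 0 \<Longrightarrow> \<exists>K. \<forall>k\<ge>K. \<forall>j. cmod (s k j - t j) \<le> e"
  shows "t \<in> S"
proof -
  have "\<forall>k. \<exists>g. continuous_on UNIV g \<and> (\<forall>e>0. eventually (\<lambda>j. cmod (s k j - g (intmul j x1)) < e) F)"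
    using sk unfolding S_def by blast
  then obtain g where g: "\<And>k. continuous_on UNIV (g k)"
    "\<And>k. \<forall>e>0. eventually (\<lambda>j. cmod (s k j - g k (intmul j x1)) < e) F"
    by metis
  have cau: "\<exists>N. \<forall>m n z. N \<le> m \<and> N \<le> n \<and> True \<longrightarrow> dist (g m z) (g n z) < e" if e: "e > 0" for e
  proof -
    obtain K where K: "\<forall>k\<ge>K. \<forall>j. cmod (s k j - t j) \<le> e/3" using unif[of "e/3"] e by auto
    have "dist (g m z) (g n z) < e" if "K \<le> m" "K \<le> n" for m n z
    proof -
      have "\<forall>j. cmod (s m j - s n j) \<le> 2*e/3"
      proof
        fix j
        have "cmod (s m j - s n j) \<le> cmod (s m j - t j) + cmod (t j - s n j)" by (rule tri2)
        moreover have "cmod (t j - s n j) = cmod (s n j - t j)" by (rule norm_minus_commute)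
        moreover have "cmod (s m j - t j) \<le> e/3" "cmod (s n j - t j) \<le> e/3" using K that by auto
        ultimately show "cmod (s m j - s n j) \<le> 2*e/3" by linarith
      qed
      from g_close[OF g(1) g(2) g(1) g(2) this] have "cmod (g m z - g n z) \<le> 2*e/3" .
      then show ?thesis using e by (simp add: dist_norm)
    qed
    then show ?thesis by blast
  qed
  then obtain l where l: "\<forall>e>0. \<exists>N. \<forall>n x. N \<le> n \<and> True \<longrightarrow> dist (g n x) (l x) < e"
    using uniformly_convergent_eq_cauchy[of "\<lambda>_. True" g] by blast
  have "uniform_limit UNIV g l sequentially"
    unfolding uniform_limit_iff
  proof (intro allI impI)
    fix e :: real assume "e > 0"
    then obtain N where "\<forall>n x. N \<le> n \<and> True \<longrightarrow> dist (g n x) (l x) < e" using l by blast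
    then show "\<forall>\<^sub>F n in sequentially. \<forall>x\<in>UNIV. dist (g n x) (l x) < e"
      unfolding eventually_sequentially by blast
  qed
  then have lc: "continuous_on UNIV l"
    by (rule uniform_limit_theorem[rotated]) (auto simp: g(1))
  have "eventually (\<lambda>j. cmod (t j - l (intmul j x1)) < e) F" if e: "e > 0" for e
  proof -
    obtain K where K: "\<forall>k\<ge>K. \<forall>j. cmod (s k j - t j) \<le> e/3" using unif[of "e/3"] e by auto
    obtain N where N: "\<forall>n x. N \<le> n \<and> True \<longrightarrow> dist (g n x) (l x) < e/3" using l e by (meson divide_pos_pos zero_less_numeral)
    define k where "k = max K N"
    have "eventually (\<lambda>j. cmod (s k j - g k (intmul j x1)) < e/3) F" by (rule g(2)[of k, rule_format]) (use e in simp)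
    then show ?thesis
    proof (rule eventually_mono)
      fix j assume a: "cmod (s k j - g k (intmul j x1)) < e/3"
      have b: "cmod (t j - s k j) \<le> e/3" using K by (simp add: k_def norm_minus_commute)
      have c: "cmod (g k (intmul j x1) - l (intmul j x1)) < e/3" using N by (simp add: k_def dist_norm)
      have "cmod (t j - l (intmul j x1)) \<le> cmod (t j - s k j) + cmod (s k j - g k (intmul j x1)) + cmod (g k (intmul j x1) - l (intmul j x1))"
        by (rule tri3)
      then show "cmod (t j - l (intmul j x1)) < e" using a b c by linarith
    qed
  qed
  then show ?thesis using lc unfolding S_def by blast
qed

end



definition band :: "int \<Rightarrow> int mat \<Rightarrow> bool" where
  "band N M \<longleftrightarrow> (\<forall>i j. \<bar>i - j\<bar> > N \<longrightarrow> M i j = 0)"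

lemma band_mono: "band N M \<Longrightarrow> N \<le> N' \<Longrightarrow> band N' M"
  unfolding band_def by auto

lemma mult_band_sum:
  assumes "band N M"
  shows "mat_mult M M' i j = (\<Sum>p\<in>{-N..N}. M i (i+p) * M' (i+p) j)"
proof -
  have "mat_mult M M' i j = infsum (\<lambda>l. M i l * M' l j) {i-N..i+N}"
    unfolding mat_mult_def
    by (rule infsum_cong_neutral) (use assms in \<open>auto simp: band_def\<close>)
  also have "\<dots> = (\<Sum>l\<in>{i-N..i+N}. M i l * M' l j)" by simp
  also have "\<dots> = (\<Sum>p\<in>{-N..N}. M i (i+p) * M' (i+p) j)"
    by (rule sum.reindex_bij_witness[of _ "\<lambda>p. i + p" "\<lambda>l. l - i"]) auto
  finally show ?thesis .
qed

context Sctx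
begin

definition BG :: "int mat \<Rightarrow> bool" where
  "BG M \<longleftrightarrow> (\<exists>N. band N M) \<and> (\<forall>n. (\<lambda>k. M (k+n) k) \<in> S)"

lemma BG_add: "BG a \<Longrightarrow> BG b \<Longrightarrow> BG (mat_add a b)"
proof -
  assume a: "BG a" and b: "BG b"
  obtain N1 N2 where n: "band N1 a" "band N2 b" using a b by (auto simp: BG_def)
  have "band (max N1 N2) (mat_add a b)"
    using n unfolding band_def mat_add_def by (metis add.right_neutral max.strict_boundedE)
  moreover have "(\<lambda>k. mat_add a b (k+n) k) \<in> S" for n
    using S_add[of "\<lambda>k. a (k+n) k" "\<lambda>k. b (k+n) k"] a b by (simp add: BG_def mat_add_def)
  ultimately show ?thesis by (auto simp: BG_def)
qed

lemma BG_scale: "BG a \<Longrightarrow> BG (mat_scale c a)"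
proof -
  assume a: "BG a"
  obtain N1 where n: "band N1 a" using a by (auto simp: BG_def)
  have "band N1 (mat_scale c a)" using n unfolding band_def mat_scale_def by auto
  moreover have "(\<lambda>k. mat_scale c a (k+n) k) \<in> S" for n
    using S_scale[of "\<lambda>k. a (k+n) k" c] a by (simp add: BG_def mat_scale_def)
  ultimately show ?thesis by (auto simp: BG_def)
qed

lemma BG_adj: "BG a \<Longrightarrow> BG (mat_adj a)"
proof -
  assume a: "BG a"
  obtain N1 where n: "band N1 a" using a by (auto simp: BG_def)
  have "band N1 (mat_adj a)" using n unfolding band_def mat_adj_def by (auto simp: abs_minus_commute)
  moreover have "(\<lambda>k. mat_adj a (k+n) k) \<in> S" for n
  proof -
    have allD: "\<And>n. (\<lambda>k. a (k+n) k) \<in> S" using a by (simp add: BG_def)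
    have "(\<lambda>k. a (k + (-n)) k) \<in> S" by (rule allD)
    then have "(\<lambda>k. cnj (a ((k + n) + (-n)) (k + n))) \<in> S" by (intro S_cnj S_shift[where s="\<lambda>k. a (k + (-n)) k"])
    then show ?thesis by (simp add: mat_adj_def)
  qed
  ultimately show ?thesis by (auto simp: BG_def)
qed

lemma BG_mult: "BG a \<Longrightarrow> BG b \<Longrightarrow> BG (mat_mult a b)"
proof -
  assume a: "BG a" and b: "BG b"
  obtain N1 N2 where n: "band N1 a" "band N2 b" using a b by (auto simp: BG_def)
  have "band (N1 + N2) (mat_mult a b)"
    unfolding band_def
  proof (intro allI impI)
    fix i j assume ij: "\<bar>i - j\<bar> > N1 + N2"
    have "a i (i+p) * b (i+p) j = 0" if "p \<in> {-N1..N1}" for p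
    proof -
      have "\<bar>(i+p) - j\<bar> > N2" using ij that by auto
      then show ?thesis using n(2) by (simp add: band_def)
    qed
    then show "mat_mult a b i j = 0" unfolding mult_band_sum[OF n(1)] by (intro sum.neutral) auto
  qed
  moreover have "(\<lambda>k. mat_mult a b (k+n) k) \<in> S" for n
  proof -
    have "(\<lambda>k. \<Sum>p\<in>{-N1..N1}. a (k+(n+p) + (-p)) (k + (n+p)) * b (k+(n+p)) k) \<in> S"
    proof (rule S_sum)
      fix p
      have allD: "\<And>n. (\<lambda>k. a (k+n) k) \<in> S" "\<And>n. (\<lambda>k. b (k+n) k) \<in> S" using a b by (simp_all add: BG_def)
      have "(\<lambda>k. a (k + (-p)) k) \<in> S" "(\<lambda>k. b (k + (n+p)) k) \<in> S" by (rule allD(1), rule allD(2))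
      then show "(\<lambda>k. a (k+(n+p) + (-p)) (k + (n+p)) * b (k+(n+p)) k) \<in> S"
        by (intro S_mult S_shift[where s="\<lambda>k. a (k + (-p)) k"])
    qed simp
    then show ?thesis by (simp add: mult_band_sum[OF n(1)] add.assoc)
  qed
  ultimately show ?thesis by (auto simp: BG_def)
qed

lemma BG_V: "BG shiftV"
proof -
  have "band 1 shiftV" by (auto simp: band_def shiftV_def)
  moreover have "(\<lambda>k. shiftV (k+n) k) \<in> S" for n
    using S_const[of "if n = 1 then 1 else 0"] by (simp add: shiftV_def)
  ultimately show ?thesis by (auto simp: BG_def)
qed

lemma BG_M: "continuous_on UNIV f \<Longrightarrow> BG (multM x1 f)"
proof -
  assume f: "continuous_on UNIV f"
  have "band 0 (multM x1 f)" by (auto simp: band_def multM_def diag_mat_def)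
  moreover have "(\<lambda>k. multM x1 f (k+n) k) \<in> S" for n
    using S_fun[OF f] S_zero by (cases "n = 0") (auto simp: multM_def diag_mat_def)
  ultimately show ?thesis by (auto simp: BG_def)
qed

end



lemma nsq_le_1_cs:
  assumes "nsq F x \<le> 1" "nsq F y \<le> 1"
  shows "(\<Sum>i\<in>F. cmod (y i) * cmod (x i)) \<le> 1"
proof -
  have "(\<Sum>i\<in>F. cmod (y i) * cmod (x i)) = (\<Sum>i\<in>F. \<bar>cmod (y i)\<bar> * \<bar>cmod (x i)\<bar>)" by simp
  also have "\<dots> \<le> sqrt (nsq F y) * sqrt (nsq F x)" by (rule cs_real)
  also have "\<dots> \<le> 1 * 1" using assms by (intro mult_mono) (auto simp: sum_nonneg)
  finally show ?thesis by simp
qed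

lemma diag_bounded:
  fixes d :: "'i \<Rightarrow> complex"
  assumes "\<And>i. cmod (d i) \<le> C" "C \<ge> 0"
  shows "bounded_mat (diag_mat d)" "opnorm (diag_mat d) \<le> C"
proof -
  have "bf (diag_mat d) F x y \<le> C" if F: "finite F" and x: "nsq F x \<le> 1" and y: "nsq F y \<le> 1" for F x y
  proof -
    have inner: "(\<Sum>j\<in>F. cnj (y i) * diag_mat d i j * x j) = cnj (y i) * d i * x i" if "i \<in> F" for i
    proof -
      have "(\<Sum>j\<in>F. cnj (y i) * diag_mat d i j * x j) = (\<Sum>j\<in>F. if i = j then cnj (y i) * d i * x i else 0)"
        by (rule sum.cong) (auto simp: diag_mat_def)
      then show ?thesis using that F by simp
    qed
    have "(\<Sum>i\<in>F. \<Sum>j\<in>F. cnj (y i) * diag_mat d i j * x j) = (\<Sum>i\<in>F. cnj (y i) * d i * x i)"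
      by (rule sum.cong) (simp_all add: inner)
    then have "bf (diag_mat d) F x y \<le> (\<Sum>i\<in>F. cmod (cnj (y i) * d i * x i))"
      by (simp add: norm_sum)
    also have "\<dots> \<le> (\<Sum>i\<in>F. C * (cmod (y i) * cmod (x i)))"
      using assms by (intro sum_mono) (simp add: norm_mult mult_right_mono mult_ac)
    also have "\<dots> = C * (\<Sum>i\<in>F. cmod (y i) * cmod (x i))" by (simp add: sum_distrib_left)
    also have "\<dots> \<le> C * 1" using nsq_le_1_cs[OF x y] assms(2) by (intro mult_left_mono) auto
    finally show ?thesis by simp
  qed
  from opnorm_leI[of "diag_mat d", OF this] show "bounded_mat (diag_mat d)" "opnorm (diag_mat d) \<le> C" by auto
qed

lemma perm_bounded:
  fixes \<sigma> :: "'i \<Rightarrow> 'i"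
  assumes inj: "inj \<sigma>"
  shows "bounded_mat (\<lambda>i j. if i = \<sigma> j then 1 else 0)"
proof -
  let ?m = "(\<lambda>i j. if i = \<sigma> j then 1 else 0) :: 'i mat"
  have "bf ?m F x y \<le> 1" if F: "finite F" and x: "nsq F x \<le> 1" and y: "nsq F y \<le> 1" for F x y
  proof -
    define J where "J = {j\<in>F. \<sigma> j \<in> F}"
    have J: "finite J" "J \<subseteq> F" using F by (auto simp: J_def)
    have "(\<Sum>i\<in>F. \<Sum>j\<in>F. cnj (y i) * ?m i j * x j) = (\<Sum>j\<in>F. \<Sum>i\<in>F. cnj (y i) * ?m i j * x j)"
      by (rule sum.swap)
    also have "\<dots> = (\<Sum>j\<in>F. if \<sigma> j \<in> F then cnj (y (\<sigma> j)) * x j else 0)"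
    proof (rule sum.cong)
      fix j
      have "(\<Sum>i\<in>F. cnj (y i) * ?m i j * x j) = (\<Sum>i\<in>F. if i = \<sigma> j then cnj (y (\<sigma> j)) * x j else 0)"
        by (rule sum.cong) auto
      then show "(\<Sum>i\<in>F. cnj (y i) * ?m i j * x j) = (if \<sigma> j \<in> F then cnj (y (\<sigma> j)) * x j else 0)"
        using F by simp
    qed simp
    also have "\<dots> = (\<Sum>j\<in>F. if j \<in> J then cnj (y (\<sigma> j)) * x j else 0)"
      by (rule sum.cong) (auto simp: J_def)
    also have "\<dots> = (\<Sum>j\<in>J. cnj (y (\<sigma> j)) * x j)" by (rule sum_if_sub[OF F J(2)])
    finally have "bf ?m F x y \<le> (\<Sum>j\<in>J. cmod (y (\<sigma> j)) * cmod (x j))"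
      by (simp add: norm_sum norm_mult order_trans[OF norm_sum])
    also have "\<dots> \<le> 1"
    proof (rule nsq_le_1_cs)
      show "nsq J x \<le> 1" using x J F by (meson order_trans sum_mono2 zero_le_power2)
      have "nsq J (\<lambda>j. y (\<sigma> j)) = nsq (\<sigma> ` J) y"
        using inj by (simp add: sum.reindex inj_on_def inj_def)
      also have "\<dots> \<le> nsq F y" using F by (intro sum_mono2) (auto simp: J_def)
      finally show "nsq J (\<lambda>j. y (\<sigma> j)) \<le> 1" using y by simp
    qed
    finally show ?thesis .
  qed
  from opnorm_leI[of ?m, OF this] show ?thesis by auto
qed

lemma shiftV_bounded: "bounded_mat shiftV"
proof -
  have "shiftV = (\<lambda>i j. if i = (\<lambda>j. j+1) j then 1 else 0)" by (simp add: shiftV_def)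
  then show ?thesis using perm_bounded[of "\<lambda>j::int. j+1"] by (simp add: inj_def)
qed

lemma shiftU_bounded: "bounded_mat shiftU"
proof -
  have "shiftU = (\<lambda>i j. if i = (\<lambda>j. j+1) j then 1 else 0)" by (simp add: shiftU_def)
  then show ?thesis using perm_bounded[of "\<lambda>j::nat. j+1"] by (simp add: inj_def)
qed

definition ext :: "nat mat \<Rightarrow> int mat" where
  "ext m i j = (if 0 \<le> i \<and> 0 \<le> j then m (nat i) (nat j) else 0)"

lemma ext_add: "ext (mat_add a b) = mat_add (ext a) (ext b)"
  by (auto simp: ext_def mat_add_def fun_eq_iff)
lemma ext_scale: "ext (mat_scale c a) = mat_scale c (ext a)"
  by (auto simp: ext_def mat_scale_def fun_eq_iff)
lemma ext_adj: "ext (mat_adj a) = mat_adj (ext a)"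
  by (auto simp: ext_def mat_adj_def fun_eq_iff)
lemma ext_mdiff: "ext (mdiff a b) = mdiff (ext a) (ext b)"
  by (auto simp: ext_def mdiff_def fun_eq_iff)

lemma ext_mult: "ext (mat_mult a b) = mat_mult (ext a) (ext b)"
proof (intro ext)
  fix i j :: int
  show "ext (mat_mult a b) i j = mat_mult (ext a) (ext b) i j"
  proof (cases "0 \<le> i \<and> 0 \<le> j")
    case True
    have "mat_mult (ext a) (ext b) i j = infsum (\<lambda>l. ext a i l * ext b l j) (range int)"
      unfolding mat_mult_def
      by (rule infsum_cong_neutral) (auto simp: ext_def image_iff, presburger)
    also have "\<dots> = infsum ((\<lambda>l. ext a i l * ext b l j) \<circ> int) UNIV"
      by (rule infsum_reindex) simp
    also have "\<dots> = ext (mat_mult a b) i j"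
      using True by (simp add: ext_def mat_mult_def o_def)
    finally show ?thesis by simp
  next
    case False
    then show ?thesis by (auto simp: ext_def mat_mult_def)
  qed
qed

lemma ext_entry: "bounded_mat m \<Longrightarrow> cmod (ext m i j) \<le> opnorm m"
  using entry_le[of m] opnorm_nonneg[of m] by (auto simp: ext_def)

context Sctx
begin

lemma diag_in_S:
  assumes ap: "approx (\<lambda>b. BG (E b)) a"
    and Eb: "\<And>m i j. bounded_mat m \<Longrightarrow> cmod (E m i j) \<le> opnorm m"
    and Ed: "\<And>a b. E (mdiff a b) = mdiff (E a) (E b)"
  shows "(\<lambda>k. E a (k+n) k) \<in> S"
proof -
  have ba: "bounded_mat a" using ap by (simp add: approx_def)
  have "\<forall>k::nat. \<exists>b. BG (E b) \<and> bounded_mat b \<and> opnorm (mdiff a b) < 1 / (real k + 1)"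
    using ap unfolding approx_def by auto
  then obtain b where b: "\<And>k. BG (E (b k))" "\<And>k. bounded_mat (b k)" "\<And>k. opnorm (mdiff a (b k)) < 1 / (real k + 1)"
    by metis
  show ?thesis
  proof (rule S_closed[where s="\<lambda>k j. E (b k) (j+n) j"])
    fix k show "(\<lambda>j. E (b k) (j+n) j) \<in> S" using b(1)[of k] by (simp add: BG_def)
  next
    fix e :: real assume e: "e > 0"
    obtain K :: nat where K: "1 / (real K + 1) < e"
      using e by (metis add.commute nat_approx_posE of_nat_Suc)
    have "cmod (E (b k) (j+n) j - E a (j+n) j) \<le> e" if "k \<ge> K" for k j
    proof -
      have "cmod (E (b k) (j+n) j - E a (j+n) j) = cmod (E (mdiff (b k) a) (j+n) j)"
        unfolding Ed by (simp add: mdiff_def)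
      also have "\<dots> \<le> opnorm (mdiff (b k) a)" by (rule Eb[OF opnorm_mdiff(1)[OF b(2) ba]])
      also have "\<dots> = opnorm (mdiff a (b k))" by (rule opnorm_mdiff_sym[OF b(2) ba])
      also have "\<dots> < 1 / (real k + 1)" by (rule b(3))
      also have "\<dots> \<le> 1 / (real K + 1)" using that by (simp add: frac_le)
      finally show ?thesis using K by simp
    qed
    then show "\<exists>K. \<forall>k\<ge>K. \<forall>j. cmod (E (b k) (j+n) j - E a (j+n) j) \<le> e" by blast
  qed
qed

lemma BG_extU:
  assumes nn: "eventually (\<lambda>k. 0 \<le> k) F"
  shows "BG (ext shiftU)"
proof -
  have "band 1 (ext shiftU)" by (auto simp: band_def ext_def shiftU_def)
  moreover have "(\<lambda>k. ext shiftU (k+n) k) \<in> S" for n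
  proof (rule S_ev[OF _ S_const[of "if n = 1 then 1 else 0"]])
    show "eventually (\<lambda>k. ext shiftU (k+n) k = (if n = 1 then 1 else 0)) F"
      using nn by (rule eventually_mono) (auto simp: ext_def shiftU_def)
  qed
  ultimately show ?thesis by (auto simp: BG_def)
qed

lemma BG_extM:
  assumes nn: "eventually (\<lambda>k. 0 \<le> k) F" and f: "continuous_on UNIV f"
  shows "BG (ext (multMp x1 f))"
proof -
  have "band 0 (ext (multMp x1 f))" by (auto simp: band_def ext_def multMp_def diag_mat_def)
  moreover have "(\<lambda>k. ext (multMp x1 f) (k+n) k) \<in> S" for n
  proof (cases "n = 0")
    case True
    show ?thesis
    proof (rule S_ev[OF _ S_fun[OF f]])
      show "eventually (\<lambda>k. ext (multMp x1 f) (k+n) k = f (intmul k x1)) F"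
        using nn by (rule eventually_mono) (auto simp: ext_def multMp_def diag_mat_def True)
    qed
  next
    case False
    show ?thesis
    proof (rule S_ev[OF _ S_zero])
      show "eventually (\<lambda>k. ext (multMp x1 f) (k+n) k = 0) F"
        using nn by (rule eventually_mono) (auto simp: ext_def multMp_def diag_mat_def False eq_nat_nat_iff)
    qed
  qed
  ultimately show ?thesis by (auto simp: BG_def)
qed

end



lemma diff_nbhd:
  fixes V :: "'g::topological_ab_group_add set"
  assumes "open V" "0 \<in> V"
  obtains V' where "open V'" "0 \<in> V'" "\<And>a b. a \<in> V' \<Longrightarrow> b \<in> V' \<Longrightarrow> a - b \<in> V"
proof -
  have c: "continuous_on UNIV (\<lambda>p::'g \<times> 'g. fst p - snd p)" by (intro continuous_intros)
  have "open ((\<lambda>p::'g \<times> 'g. fst p - snd p) -` V \<inter> UNIV)"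
    using c assms(1) continuous_on_open_vimage[OF open_UNIV] by blast
  moreover have "(0,0) \<in> (\<lambda>p::'g \<times> 'g. fst p - snd p) -` V \<inter> UNIV" using assms(2) by simp
  ultimately obtain A B where AB: "open A" "open B" "(0,0) \<in> A \<times> B"
      "A \<times> B \<subseteq> (\<lambda>p::'g \<times> 'g. fst p - snd p) -` V \<inter> UNIV"
    by (rule open_prod_elim)
  show ?thesis
  proof (rule that[of "A \<inter> B"])
    show "open (A \<inter> B)" using AB by auto
    show "0 \<in> A \<inter> B" using AB by auto
    fix a b assume "a \<in> A \<inter> B" "b \<in> A \<inter> B"
    then have "(a, b) \<in> A \<times> B" by auto
    then show "a - b \<in> V" using AB(4) by auto
  qed
qed

lemma recurrence:
  fixes x1 :: "'g::topological_ab_group_add"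
  assumes cpt: "compact (UNIV :: 'g set)" and V: "open V" "0 \<in> V"
  shows "\<exists>m\<ge>M. intmul m x1 \<in> V"
proof -
  obtain V' where V': "open V'" "0 \<in> V'" "\<And>a b. a \<in> V' \<Longrightarrow> b \<in> V' \<Longrightarrow> a - b \<in> V"
    using diff_nbhd[OF V] by blast
  define C where "C = {(\<lambda>w. w - g) -` V' | g. True}"
  have "\<forall>c\<in>C. open c"
  proof
    fix c assume "c \<in> C"
    then obtain g where g: "c = (\<lambda>w. w - g) -` V'" by (auto simp: C_def)
    have "continuous_on UNIV (\<lambda>w::'g. w - g)" by (intro continuous_intros)
    then have "open ((\<lambda>w. w - g) -` V' \<inter> UNIV)" using V'(1) continuous_on_open_vimage[OF open_UNIV] by blast
    then show "open c" using g by simp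
  qed
  moreover have "UNIV \<subseteq> \<Union>C"
  proof
    fix w :: 'g
    have "w \<in> (\<lambda>w. w - w) -` V'" using V'(2) by simp
    then show "w \<in> \<Union>C" unfolding C_def by blast
  qed
  ultimately obtain D where D: "D \<subseteq> C" "finite D" "UNIV \<subseteq> \<Union>D"
    using cpt unfolding compact_eq_Heine_Borel by meson
  define M' where "M' = max M 1"
  define \<phi> where "\<phi> i = (SOME d. d \<in> D \<and> intmul (int i * M') x1 \<in> d)" for i :: nat
  have \<phi>: "\<phi> i \<in> D \<and> intmul (int i * M') x1 \<in> \<phi> i" for i
  proof -
    have "\<exists>d. d \<in> D \<and> intmul (int i * M') x1 \<in> d" using D(3) by blast
    then show ?thesis unfolding \<phi>_def by (rule someI_ex)
  qed
  have "finite (\<phi> ` UNIV)" using D(2) \<phi> by (meson finite_subset image_subsetI)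
  then obtain i0 where i0: "infinite {i. \<phi> i = \<phi> i0}"
    using pigeonhole_infinite[of "UNIV :: nat set" \<phi>] by auto
  have "\<not> {i. \<phi> i = \<phi> i0} \<subseteq> {..i0}" using i0 finite_subset by blast
  then obtain j where j0: "\<phi> j = \<phi> i0" "\<not> j \<le> i0" by blast
  then have j: "\<phi> j = \<phi> i0" "j > i0" by auto
  obtain g where g: "\<phi> i0 = (\<lambda>w. w - g) -` V'" using \<phi>[of i0] D(1) by (auto simp: C_def)
  have "intmul (int j * M') x1 - g \<in> V'" "intmul (int i0 * M') x1 - g \<in> V'"
    using \<phi>[of j] \<phi>[of i0] j(1) g by auto
  from V'(3)[OF this] have "intmul (int j * M') x1 - intmul (int i0 * M') x1 \<in> V" by simp
  then have "intmul ((int j - int i0) * M') x1 \<in> V" by (simp add: intmul_diff left_diff_distrib)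
  moreover have "(int j - int i0) * M' \<ge> M"
  proof -
    have "int j - int i0 \<ge> 1" using j(2) by simp
    moreover have "M' \<ge> 1" "M' \<ge> M" by (auto simp: M'_def)
    ultimately have "(int j - int i0) * M' \<ge> 1 * M'" by (intro mult_right_mono) auto
    then show ?thesis using \<open>M' \<ge> M\<close> by simp
  qed
  ultimately show ?thesis by blast
qed

lemma tail_dense:
  fixes x1 :: "'g::topological_ab_group_add"
  assumes cpt: "compact (UNIV :: 'g set)" and dense: "closure (range (\<lambda>n::int. intmul n x1)) = UNIV"
    and W: "open W" "W \<noteq> {}"
  shows "\<exists>k\<ge>N. intmul k x1 \<in> W"
proof -
  have "W \<inter> range (\<lambda>n::int. intmul n x1) \<noteq> {}"
    using open_Int_closure_eq_empty[OF W(1), of "range (\<lambda>n::int. intmul n x1)"] dense W(2) by auto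
  then obtain q where q: "intmul q x1 \<in> W" by auto
  define V where "V = (\<lambda>v. v + intmul q x1) -` W"
  have "continuous_on UNIV (\<lambda>v::'g. v + intmul q x1)" by (intro continuous_intros)
  then have "open (V \<inter> UNIV)" unfolding V_def using W(1) continuous_on_open_vimage[OF open_UNIV] by blast
  then have oV: "open V" by simp
  have "0 \<in> V" using q by (simp add: V_def)
  then obtain m where m: "m \<ge> N - q" "intmul m x1 \<in> V" using recurrence[OF cpt oV] by blast
  then have "intmul (m + q) x1 \<in> W" by (simp add: V_def intmul_add)
  moreover have "m + q \<ge> N" using m by simp
  ultimately show ?thesis by blast
qed

lemma Sctx_B:
  fixes x1 :: "'g::{topological_ab_group_add,t2_space}"
  assumes cpt: "compact (UNIV :: 'g set)" and dense: "closure (range (\<lambda>n::int. intmul n x1)) = UNIV"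
  shows "Sctx x1 (principal UNIV)"
proof
  show "compact (UNIV :: 'g set)" by fact
  fix P p assume "eventually P (principal (UNIV :: int set))"
  then show "eventually (\<lambda>k. P (k + p)) (principal UNIV)" by (simp add: eventually_principal)
next
  fix P and W :: "'g set" assume P: "eventually P (principal (UNIV :: int set))" and W: "open W" "W \<noteq> {}"
  obtain k where "intmul k x1 \<in> W" using tail_dense[OF cpt dense W] by blast
  then show "\<exists>k. P k \<and> intmul k x1 \<in> W" using P by (auto simp: eventually_principal)
qed

lemma Sctx_A:
  fixes x1 :: "'g::{topological_ab_group_add,t2_space}"
  assumes cpt: "compact (UNIV :: 'g set)" and dense: "closure (range (\<lambda>n::int. intmul n x1)) = UNIV"
  shows "Sctx x1 at_top"
proof
  show "compact (UNIV :: 'g set)" by fact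
  fix P p assume "eventually P (at_top :: int filter)"
  then obtain N where N: "\<forall>n\<ge>N. P n" by (auto simp: eventually_at_top_linorder)
  then have "\<forall>n\<ge>N - p. P (n + p)" by auto
  then show "eventually (\<lambda>k. P (k + p)) at_top" by (auto simp: eventually_at_top_linorder)
next
  fix P and W :: "'g set" assume P: "eventually P (at_top :: int filter)" and W: "open W" "W \<noteq> {}"
  then obtain N where N: "\<forall>n\<ge>N. P n" by (auto simp: eventually_at_top_linorder)
  obtain k where "k \<ge> N" "intmul k x1 \<in> W" using tail_dense[OF cpt dense W] by blast
  then show "\<exists>k. P k \<and> intmul k x1 \<in> W" using N by auto
qed



lemma infsum_single: "infsum (\<lambda>k. if k = c then f k else (0::complex)) UNIV = f c"
proof -
  have "infsum (\<lambda>k. if k = c then f k else (0::complex)) UNIV = infsum (\<lambda>k. if k = c then f k else 0) {c}"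
    by (rule infsum_cong_neutral) auto
  then show ?thesis by simp
qed

lemma diag_mult_left: "mat_mult (diag_mat d) X i j = d i * X i j"
proof -
  have "mat_mult (diag_mat d) X i j = infsum (\<lambda>k. if k = i then d i * X k j else 0) UNIV"
    unfolding mat_mult_def by (rule infsum_cong) (auto simp: diag_mat_def)
  then show ?thesis by (simp add: infsum_single)
qed

lemma diag_mult_right: "mat_mult X (diag_mat d) i j = X i j * d j"
proof -
  have "mat_mult X (diag_mat d) i j = infsum (\<lambda>k. if k = j then X i k * d j else 0) UNIV"
    unfolding mat_mult_def by (rule infsum_cong) (auto simp: diag_mat_def)
  then show ?thesis by (simp add: infsum_single)
qed

lemma rhoK_entry: "rhoK \<theta> a i j = cis (\<theta> * real i) * a i j * cis (- \<theta> * real j)"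
  unfolding rhoK_def by (simp add: diag_mult_left diag_mult_right)

lemma rhoL_entry: "rhoL \<theta> a i j = cis (\<theta> * real_of_int i) * a i j * cis (- \<theta> * real_of_int j)"
  unfolding rhoL_def by (simp add: diag_mult_left diag_mult_right)

lemma spec_entry:
  fixes p q n :: real
  shows "(\<forall>\<theta>. cis (\<theta> * p) * z * cis (- \<theta> * q) = cis (n * \<theta>) * z) \<longleftrightarrow> (z = 0 \<or> p - q = n)"
proof
  assume H: "\<forall>\<theta>. cis (\<theta> * p) * z * cis (- \<theta> * q) = cis (n * \<theta>) * z"
  show "z = 0 \<or> p - q = n"
  proof (rule ccontr)
    assume "\<not> (z = 0 \<or> p - q = n)"
    then have z: "z \<noteq> 0" and d: "p - q - n \<noteq> 0" by auto
    define \<theta> where "\<theta> = pi / (p - q - n)"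
    have "cis (\<theta> * p) * cis (- \<theta> * q) * z = cis (n * \<theta>) * z" using H[rule_format, of \<theta>] by (simp add: mult_ac)
    then have "cis (\<theta> * p) * cis (- \<theta> * q) = cis (n * \<theta>)" using z by simp
    then have "cis (\<theta> * p + - \<theta> * q) = cis (n * \<theta>)" by (simp add: cis_mult)
    then have "cis (\<theta> * p + - \<theta> * q) / cis (n * \<theta>) = 1" by simp
    then have "cis (\<theta> * (p - q - n)) = 1" by (simp add: cis_divide algebra_simps)
    then have "cis pi = 1" using d by (simp add: \<theta>_def)
    then show False by simp
  qed
next
  assume "z = 0 \<or> p - q = n"
  then show "\<forall>\<theta>. cis (\<theta> * p) * z * cis (- \<theta> * q) = cis (n * \<theta>) * z"
  proof
    assume "p - q = n"
    then have "cis (\<theta> * p) * cis (- \<theta> * q) = cis (n * \<theta>)" for \<theta>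
      by (simp add: cis_mult algebra_simps flip: \<open>p - q = n\<close>)
    then show ?thesis by (metis mult.commute mult.left_commute)
  qed simp
qed

lemma spectral_A_iff:
  "spectral_A x1 n = {a \<in> alg_A x1. \<forall>i j. a i j = 0 \<or> real i - real j = real_of_int n}"
proof -
  have "(\<forall>\<theta>. rhoK \<theta> a = mat_scale (cis (real_of_int n * \<theta>)) a) \<longleftrightarrow> (\<forall>i j. a i j = 0 \<or> real i - real j = real_of_int n)" for a :: "nat mat"
  proof -
    have "(\<forall>\<theta>. rhoK \<theta> a = mat_scale (cis (real_of_int n * \<theta>)) a) \<longleftrightarrow>
          (\<forall>i j. \<forall>\<theta>. cis (\<theta> * real i) * a i j * cis (- \<theta> * real j) = cis (real_of_int n * \<theta>) * a i j)"
      by (auto simp: fun_eq_iff rhoK_entry mat_scale_def)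
    then show ?thesis by (simp only: spec_entry)
  qed
  then show ?thesis unfolding spectral_A_def by auto
qed

lemma spectral_B_iff:
  "spectral_B x1 n = {a \<in> alg_B x1. \<forall>i j. a i j = 0 \<or> i - j = n}"
proof -
  have "(\<forall>\<theta>. rhoL \<theta> a = mat_scale (cis (real_of_int n * \<theta>)) a) \<longleftrightarrow> (\<forall>i j. a i j = 0 \<or> i - j = n)" for a :: "int mat"
  proof -
    have "(\<forall>\<theta>. rhoL \<theta> a = mat_scale (cis (real_of_int n * \<theta>)) a) \<longleftrightarrow>
          (\<forall>i j. \<forall>\<theta>. cis (\<theta> * real_of_int i) * a i j * cis (- \<theta> * real_of_int j) = cis (real_of_int n * \<theta>) * a i j)"
      by (auto simp: fun_eq_iff rhoL_entry mat_scale_def)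
    also have "\<dots> \<longleftrightarrow> (\<forall>i j. a i j = 0 \<or> real_of_int i - real_of_int j = real_of_int n)" by (simp only: spec_entry)
    also have "\<dots> \<longleftrightarrow> (\<forall>i j. a i j = 0 \<or> i - j = n)" by (metis of_int_diff of_int_eq_iff)
    finally show ?thesis .
  qed
  then show ?thesis unfolding spectral_B_def by auto
qed

lemma mult_U_left: "mat_mult shiftU X i j = (if i = 0 then 0 else X (i - 1) j)"
proof -
  have "mat_mult shiftU X i j = infsum (\<lambda>k. if k = i - 1 then (if i = 0 then 0 else X k j) else 0) UNIV"
    unfolding mat_mult_def by (rule infsum_cong) (auto simp: shiftU_def)
  then show ?thesis by (simp add: infsum_single)
qed

lemma mult_Uadj_left: "mat_mult (mat_adj shiftU) X i j = X (i + 1) j"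
proof -
  have "mat_mult (mat_adj shiftU) X i j = infsum (\<lambda>k. if k = i + 1 then X k j else 0) UNIV"
    unfolding mat_mult_def by (rule infsum_cong) (auto simp: shiftU_def mat_adj_def)
  then show ?thesis by (simp add: infsum_single)
qed

lemma mult_Uadj_right: "mat_mult X (mat_adj shiftU) i j = (if j = 0 then 0 else X i (j - 1))"
proof -
  have "mat_mult X (mat_adj shiftU) i j = infsum (\<lambda>k. if k = j - 1 then (if j = 0 then 0 else X i k) else 0) UNIV"
    unfolding mat_mult_def by (rule infsum_cong) (auto simp: shiftU_def mat_adj_def)
  then show ?thesis by (simp add: infsum_single)
qed

lemma pow_U: "mat_pow shiftU n = (\<lambda>i j. if i = j + n then 1 else 0)"
proof (induction n)
  case 0 then show ?case by (simp add: mat_id_def diag_mat_def fun_eq_iff)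
next
  case (Suc n) then show ?case by (auto simp: fun_eq_iff mult_U_left)
qed

lemma pow_Uadj: "mat_pow (mat_adj shiftU) n = (\<lambda>i j. if j = i + n then 1 else 0)"
proof (induction n)
  case 0 then show ?case by (simp add: mat_id_def diag_mat_def fun_eq_iff)
next
  case (Suc n) then show ?case by (auto simp: fun_eq_iff mult_Uadj_left)
qed

lemma mult_powU_left: "mat_mult (mat_pow shiftU n) X i j = (if n \<le> i then X (i - n) j else 0)"
proof -
  have "mat_mult (mat_pow shiftU n) X i j = infsum (\<lambda>k. if k = i - n then (if n \<le> i then X k j else 0) else 0) UNIV"
    unfolding mat_mult_def pow_U by (rule infsum_cong) auto
  then show ?thesis by (simp add: infsum_single)
qed

lemma mult_powUadj_right: "mat_mult X (mat_pow (mat_adj shiftU) n) i j = (if n \<le> j then X i (j - n) else 0)"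
proof -
  have "mat_mult X (mat_pow (mat_adj shiftU) n) i j = infsum (\<lambda>k. if k = j - n then (if n \<le> j then X i k else 0) else 0) UNIV"
    unfolding mat_mult_def pow_Uadj by (rule infsum_cong) auto
  then show ?thesis by (simp add: infsum_single)
qed

lemma mult_V_left: "mat_mult shiftV X i j = X (i - 1) j"
proof -
  have "mat_mult shiftV X i j = infsum (\<lambda>k. if k = i - 1 then X k j else 0) UNIV"
    unfolding mat_mult_def by (rule infsum_cong) (auto simp: shiftV_def)
  then show ?thesis by (simp add: infsum_single)
qed

lemma mult_Vadj_left: "mat_mult (mat_adj shiftV) X i j = X (i + 1) j"
proof -
  have "mat_mult (mat_adj shiftV) X i j = infsum (\<lambda>k. if k = i + 1 then X k j else 0) UNIV"
    unfolding mat_mult_def by (rule infsum_cong) (auto simp: shiftV_def mat_adj_def)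
  then show ?thesis by (simp add: infsum_single)
qed

lemma pow_V: "mat_pow shiftV n = (\<lambda>i j. if i = j + int n then 1 else 0)"
proof (induction n)
  case 0 then show ?case by (simp add: mat_id_def diag_mat_def fun_eq_iff)
next
  case (Suc n) then show ?case by (auto simp: fun_eq_iff mult_V_left)
qed

lemma pow_Vadj: "mat_pow (mat_adj shiftV) n = (\<lambda>i j. if j = i + int n then 1 else 0)"
proof (induction n)
  case 0 then show ?case by (simp add: mat_id_def diag_mat_def fun_eq_iff)
next
  case (Suc n) then show ?case by (auto simp: fun_eq_iff mult_Vadj_left)
qed

lemma mult_powV_left: "mat_mult (mat_pow shiftV n) X i j = X (i - int n) j"
proof -
  have "mat_mult (mat_pow shiftV n) X i j = infsum (\<lambda>k. if k = i - int n then X k j else 0) UNIV"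
    unfolding mat_mult_def pow_V by (rule infsum_cong) auto
  then show ?thesis by (simp add: infsum_single)
qed

lemma mult_powVadj_right: "mat_mult X (mat_pow (mat_adj shiftV) n) i j = X i (j - int n)"
proof -
  have "mat_mult X (mat_pow (mat_adj shiftV) n) i j = infsum (\<lambda>k. if k = j - int n then X i k else 0) UNIV"
    unfolding mat_mult_def pow_Vadj by (rule infsum_cong) auto
  then show ?thesis by (simp add: infsum_single)
qed



lemma mdiff_self: "mdiff g g = diag_mat (\<lambda>_. 0)"
  by (simp add: mdiff_def diag_mat_def fun_eq_iff)

lemma approx_self: "bounded_mat g \<Longrightarrow> P g \<Longrightarrow> approx P g"
  unfolding approx_def using diag_bounded[of "\<lambda>_. 0" 0] by (metis mdiff_self norm_zero order_le_less_trans order_refl)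

lemma multMp_bounded:
  assumes cpt: "compact (UNIV :: 'g::topological_ab_group_add set)" and f: "continuous_on UNIV (f :: 'g \<Rightarrow> complex)"
  shows "bounded_mat (multMp x1 f)"
proof -
  have "compact (f ` UNIV)" by (rule compact_continuous_image[OF f cpt])
  then obtain B where "\<forall>z\<in>f ` UNIV. norm z \<le> B" using compact_imp_bounded bounded_iff by metis
  then show ?thesis unfolding multMp_def by (intro diag_bounded(1)[where C="max B 0"]) (auto simp: le_max_iff_disj)
qed

lemma multM_bounded:
  assumes cpt: "compact (UNIV :: 'g::topological_ab_group_add set)" and f: "continuous_on UNIV (f :: 'g \<Rightarrow> complex)"
  shows "bounded_mat (multM x1 f)"
proof -
  have "compact (f ` UNIV)" by (rule compact_continuous_image[OF f cpt])
  then obtain B where "\<forall>z\<in>f ` UNIV. norm z \<le> B" using compact_imp_bounded bounded_iff by metis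
  then show ?thesis unfolding multM_def by (intro diag_bounded(1)[where C="max B 0"]) (auto simp: le_max_iff_disj)
qed

lemma A_diag_S:
  fixes x1 :: "'g::{topological_ab_group_add,t2_space}"
  assumes cpt: "compact (UNIV :: 'g set)" and dense: "closure (range (\<lambda>n::int. intmul n x1)) = UNIV"
    and a: "a \<in> alg_A x1"
  shows "(\<lambda>k. ext a (k+n) k) \<in> Sctx.S x1 at_top"
proof -
  interpret Sctx x1 at_top by (rule Sctx_A[OF cpt dense])
  have nn: "eventually (\<lambda>k::int. 0 \<le> k) at_top" by (simp add: eventually_ge_at_top)
  have "approx (\<lambda>b. BG (ext b)) a"
  proof (rule cstar_approx[where P="\<lambda>b. BG (ext b)" and S="insert shiftU {multMp x1 f |f. continuous_on UNIV f}"])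
    show "a \<in> cstar_gen (insert shiftU {multMp x1 f |f. continuous_on UNIV f})" using a unfolding alg_A_def .
  next
    fix g assume "g \<in> insert shiftU {multMp x1 f |f. continuous_on UNIV f}"
    then show "approx (\<lambda>b. BG (ext b)) g"
    proof
      assume "g = shiftU" then show ?thesis using approx_self shiftU_bounded BG_extU[OF nn] by auto
    next
      assume "g \<in> {multMp x1 f |f. continuous_on UNIV f}"
      then obtain f where f: "continuous_on UNIV f" "g = multMp x1 f" by auto
      show ?thesis unfolding f(2) by (rule approx_self[where P="\<lambda>b. BG (ext b)" and g="multMp x1 f", OF multMp_bounded[OF cpt f(1)] BG_extM[OF nn f(1)]])
    qed
  qed (simp_all add: ext_add ext_scale ext_mult ext_adj BG_add BG_scale BG_mult BG_adj)
  then show ?thesis by (rule diag_in_S) (simp_all add: ext_entry ext_mdiff)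
qed

lemma B_diag_S:
  fixes x1 :: "'g::{topological_ab_group_add,t2_space}"
  assumes cpt: "compact (UNIV :: 'g set)" and dense: "closure (range (\<lambda>n::int. intmul n x1)) = UNIV"
    and a: "a \<in> alg_B x1"
  shows "(\<lambda>k. a (k+n) k) \<in> Sctx.S x1 (principal UNIV)"
proof -
  interpret Sctx x1 "principal UNIV" by (rule Sctx_B[OF cpt dense])
  have "approx BG a"
  proof (rule cstar_approx[where P="BG" and S="insert shiftV {multM x1 f |f. continuous_on UNIV f}"])
    show "a \<in> cstar_gen (insert shiftV {multM x1 f |f. continuous_on UNIV f})" using a unfolding alg_B_def .
  next
    fix g assume "g \<in> insert shiftV {multM x1 f |f. continuous_on UNIV f}"
    then show "approx BG g"
    proof
      assume "g = shiftV" then show ?thesis using approx_self shiftV_bounded BG_V by auto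
    next
      assume "g \<in> {multM x1 f |f. continuous_on UNIV f}"
      then obtain f where f: "continuous_on UNIV f" "g = multM x1 f" by auto
      show ?thesis unfolding f(2) by (rule approx_self[where P="BG" and g="multM x1 f", OF multM_bounded[OF cpt f(1)] BG_M[OF f(1)]])
    qed
  qed (rule BG_add BG_scale BG_mult BG_adj; assumption)+
  then have "approx (\<lambda>b. BG ((\<lambda>x. x) b)) a" by simp
  from diag_in_S[where E="\<lambda>x. x", OF this] show ?thesis by (simp add: entry_le)
qed



lemma A_U: "shiftU \<in> alg_A x1" unfolding alg_A_def by (rule cstar_gen.gen) simp
lemma A_M: "continuous_on UNIV f \<Longrightarrow> multMp x1 f \<in> alg_A x1" unfolding alg_A_def by (rule cstar_gen.gen) auto
lemma A_add: "a \<in> alg_A x1 \<Longrightarrow> b \<in> alg_A x1 \<Longrightarrow> mat_add a b \<in> alg_A x1" unfolding alg_A_def by (rule cstar_gen.add)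
lemma A_scale: "a \<in> alg_A x1 \<Longrightarrow> mat_scale c a \<in> alg_A x1" unfolding alg_A_def by (rule cstar_gen.scale)
lemma A_mult: "a \<in> alg_A x1 \<Longrightarrow> b \<in> alg_A x1 \<Longrightarrow> mat_mult a b \<in> alg_A x1" unfolding alg_A_def by (rule cstar_gen.mult)
lemma A_adj: "a \<in> alg_A x1 \<Longrightarrow> mat_adj a \<in> alg_A x1" unfolding alg_A_def by (rule cstar_gen.adj)
lemma A_id: "mat_id \<in> alg_A x1"
proof -
  have "multMp x1 (\<lambda>_. 1) = mat_id" by (simp add: multMp_def mat_id_def)
  then show ?thesis using A_M[of "\<lambda>_. 1" x1] by simp
qed
lemma A_pow: "mat_pow shiftU n \<in> alg_A x1"
  by (induction n) (simp_all add: A_id A_mult A_U)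
lemma A_powadj: "mat_pow (mat_adj shiftU) n \<in> alg_A x1"
  by (induction n) (simp_all add: A_id A_mult A_U A_adj)

lemma adjU_entry: "mat_adj shiftU i j = (if j = i + 1 then 1 else 0)"
  by (simp add: mat_adj_def shiftU_def)

lemma A_delta: "diag_mat (\<lambda>i. if i = k then 1 else 0) \<in> alg_A x1"
proof (induction k)
  case 0
  have "mat_add mat_id (mat_scale (-1) (mat_mult shiftU (mat_adj shiftU))) = diag_mat (\<lambda>i. if i = 0 then 1 else 0)"
    by (auto simp: fun_eq_iff mat_add_def mat_scale_def mult_U_left adjU_entry mat_id_def diag_mat_def)
  moreover have "mat_add mat_id (mat_scale (-1) (mat_mult shiftU (mat_adj shiftU))) \<in> alg_A x1"
    by (intro A_add A_id A_scale A_mult A_U A_adj)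
  ultimately show ?case by simp
next
  case (Suc k)
  have "mat_mult (mat_mult shiftU (diag_mat (\<lambda>i. if i = k then 1 else 0))) (mat_adj shiftU) = diag_mat (\<lambda>i. if i = Suc k then 1 else 0)"
    by (auto simp: fun_eq_iff mult_U_left mult_Uadj_right diag_mat_def)
  moreover have "mat_mult (mat_mult shiftU (diag_mat (\<lambda>i. if i = k then 1 else 0))) (mat_adj shiftU) \<in> alg_A x1"
    by (intro A_mult A_U A_adj Suc)
  ultimately show ?case by simp
qed

lemma A_trunc: "diag_mat (\<lambda>i. if i < N then \<alpha> i else 0) \<in> alg_A x1"
proof (induction N)
  case 0
  have "mat_scale 0 mat_id = diag_mat (\<lambda>i::nat. if i < 0 then \<alpha> i else 0)"
    by (simp add: fun_eq_iff mat_scale_def mat_id_def diag_mat_def)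
  then show ?case using A_scale[OF A_id, of 0 x1] by simp
next
  case (Suc N)
  have "mat_add (diag_mat (\<lambda>i. if i < N then \<alpha> i else 0)) (mat_scale (\<alpha> N) (diag_mat (\<lambda>i. if i = N then 1 else 0)))
        = diag_mat (\<lambda>i. if i < Suc N then \<alpha> i else 0)"
    by (auto simp: fun_eq_iff mat_add_def mat_scale_def diag_mat_def)
  moreover have "mat_add (diag_mat (\<lambda>i. if i < N then \<alpha> i else 0)) (mat_scale (\<alpha> N) (diag_mat (\<lambda>i. if i = N then 1 else 0))) \<in> alg_A x1"
    by (intro A_add Suc A_scale A_delta)
  ultimately show ?case by simp
qed

lemma A_diag:
  assumes \<alpha>: "\<alpha> \<longlonglongrightarrow> 0"
  shows "diag_mat \<alpha> \<in> alg_A x1"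
proof -
  have "Bseq \<alpha>" using \<alpha> by (rule convergent_imp_Bseq[OF convergentI])
  then obtain B where B: "B > 0" "\<And>n. norm (\<alpha> n) \<le> B" unfolding Bseq_def by auto
  have bd: "bounded_mat (diag_mat \<alpha>)" using diag_bounded(1)[of \<alpha> B] B by auto
  have "(\<lambda>N. opnorm (\<lambda>i j. diag_mat (\<lambda>i. if i < N then \<alpha> i else 0) i j - diag_mat \<alpha> i j)) \<longlonglongrightarrow> 0"
  proof (rule LIMSEQ_I)
    fix r :: real assume r: "r > 0"
    obtain N0 where N0: "\<forall>n\<ge>N0. norm (\<alpha> n - 0) < r/2" using LIMSEQ_D[OF \<alpha>, of "r/2"] r by auto
    have "norm (opnorm (\<lambda>i j. diag_mat (\<lambda>i. if i < N then \<alpha> i else 0) i j - diag_mat \<alpha> i j) - 0) < r" if "N \<ge> N0" for N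
    proof -
      have eq: "(\<lambda>i j. diag_mat (\<lambda>i. if i < N then \<alpha> i else 0) i j - diag_mat \<alpha> i j) = diag_mat (\<lambda>i. if i < N then 0 else - \<alpha> i)"
        by (auto simp: fun_eq_iff diag_mat_def)
      have c: "cmod (if i < N then 0 else - \<alpha> i) \<le> r/2" for i
        using N0 that r by (auto intro: less_imp_le)
      have "opnorm (diag_mat (\<lambda>i. if i < N then 0 else - \<alpha> i)) \<le> r/2" 
        by (rule diag_bounded(2)[where C="r/2"]) (use c r in auto)
      moreover have "opnorm (diag_mat (\<lambda>i. if i < N then 0 else - \<alpha> i)) \<ge> 0"
        by (rule opnorm_nonneg, rule diag_bounded(1)[where C="r/2"]) (use c r in auto)
      ultimately show ?thesis using r eq by simp
    qed
    then show "\<exists>no. \<forall>n\<ge>no. norm (opnorm (\<lambda>i j. diag_mat (\<lambda>i. if i < n then \<alpha> i else 0) i j - diag_mat \<alpha> i j) - 0) < r"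
      by blast
  qed
  then show ?thesis unfolding alg_A_def
    by (intro cstar_gen.lim[OF _ bd]) (rule A_trunc[unfolded alg_A_def])
qed

lemma B_V: "shiftV \<in> alg_B x1" unfolding alg_B_def by (rule cstar_gen.gen) simp
lemma B_M: "continuous_on UNIV f \<Longrightarrow> multM x1 f \<in> alg_B x1" unfolding alg_B_def by (rule cstar_gen.gen) auto
lemma B_mult: "a \<in> alg_B x1 \<Longrightarrow> b \<in> alg_B x1 \<Longrightarrow> mat_mult a b \<in> alg_B x1" unfolding alg_B_def by (rule cstar_gen.mult)
lemma B_adj: "a \<in> alg_B x1 \<Longrightarrow> mat_adj a \<in> alg_B x1" unfolding alg_B_def by (rule cstar_gen.adj)
lemma B_id: "mat_id \<in> alg_B x1"
proof -
  have "multM x1 (\<lambda>_. 1) = mat_id" by (simp add: multM_def mat_id_def)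
  then show ?thesis using B_M[of "\<lambda>_. 1" x1] by simp
qed
lemma B_pow: "mat_pow shiftV n \<in> alg_B x1"
  by (induction n) (simp_all add: B_id B_mult B_V)
lemma B_powadj: "mat_pow (mat_adj shiftV) n \<in> alg_B x1"
  by (induction n) (simp_all add: B_id B_mult B_V B_adj)



lemma LIMSEQ_from_at_top:
  fixes \<alpha> :: "nat \<Rightarrow> complex"
  assumes "\<forall>e>0. eventually (\<lambda>k::int. P e k) at_top"
    and "\<And>e k. P e (int k) \<Longrightarrow> cmod (\<alpha> k) < e"
  shows "\<alpha> \<longlonglongrightarrow> 0"
proof (rule LIMSEQ_I)
  fix r :: real assume "r > 0"
  then obtain K where K: "\<forall>k\<ge>K. P r k" using assms(1) by (auto simp: eventually_at_top_linorder)
  have "norm (\<alpha> k - 0) < r" if "k \<ge> nat K" for k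
    using K that assms(2)[of r k] by simp
  then show "\<exists>no. \<forall>n\<ge>no. norm (\<alpha> n - 0) < r" by blast
qed

lemma A_pos:
  fixes x1 :: "'g::{topological_ab_group_add,t2_space}"
  assumes cpt: "compact (UNIV :: 'g set)" and dense: "closure (range (\<lambda>n::int. intmul n x1)) = UNIV"
    and n: "0 \<le> n"
  shows "spectral_A x1 n = {mat_mult (mat_pow shiftU (nat n)) (mat_add (diag_mat \<alpha>) (multMp x1 f)) | \<alpha> f.
           \<alpha> \<longlonglongrightarrow> 0 \<and> continuous_on UNIV f}"
proof -
  define m where "m = nat n"
  have nm: "n = int m" using n by (simp add: m_def)
  show ?thesis unfolding spectral_A_iff m_def[symmetric]
  proof (intro equalityI subsetI)
    fix a assume "a \<in> {a \<in> alg_A x1. \<forall>i j. a i j = 0 \<or> real i - real j = real_of_int n}"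
    then have a: "a \<in> alg_A x1" and H: "\<And>i j. a i j = 0 \<or> real i - real j = real_of_int n" by auto
    have supp: "i = j + m" if "a i j \<noteq> 0" for i j
    proof -
      have "real i - real j = real m" using H[of i j] that nm by auto
      then have "real i = real (j + m)" by simp
      then show ?thesis by (simp only: of_nat_eq_iff)
    qed
    have "(\<lambda>k. ext a (k+n) k) \<in> Sctx.S x1 at_top" by (rule A_diag_S[OF cpt dense a])
    then obtain g where g: "continuous_on UNIV g"
      "\<forall>e>0. eventually (\<lambda>k. cmod (ext a (k+n) k - g (intmul k x1)) < e) at_top"
      unfolding Sctx.S_def[OF Sctx_A[OF cpt dense]] by auto
    define \<alpha> where "\<alpha> k = a (k + m) k - g (intmul (int k) x1)" for k
    have \<alpha>: "\<alpha> \<longlonglongrightarrow> 0"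
    proof (rule LIMSEQ_from_at_top[OF g(2)])
      fix e k assume "cmod (ext a (int k + n) (int k) - g (intmul (int k) x1)) < e"
      then show "cmod (\<alpha> k) < e" by (simp add: \<alpha>_def ext_def nm nat_int_add)
    qed
    have "a = mat_mult (mat_pow shiftU m) (mat_add (diag_mat \<alpha>) (multMp x1 g))"
    proof (intro ext)
      fix i j
      show "a i j = mat_mult (mat_pow shiftU m) (mat_add (diag_mat \<alpha>) (multMp x1 g)) i j"
      proof (cases "i = j + m")
        case True then show ?thesis
          by (simp add: mult_powU_left mat_add_def diag_mat_def multMp_def \<alpha>_def)
      next
        case False then show ?thesis using supp[of i j]
          by (auto simp: mult_powU_left mat_add_def diag_mat_def multMp_def)
      qed
    qed
    then show "a \<in> {mat_mult (mat_pow shiftU m) (mat_add (diag_mat \<alpha>) (multMp x1 f)) | \<alpha> f.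
           \<alpha> \<longlonglongrightarrow> 0 \<and> continuous_on UNIV f}" using \<alpha> g(1) by blast
  next
    fix a assume "a \<in> {mat_mult (mat_pow shiftU m) (mat_add (diag_mat \<alpha>) (multMp x1 f)) | \<alpha> f.
           \<alpha> \<longlonglongrightarrow> 0 \<and> continuous_on UNIV f}"
    then obtain \<alpha> f where af: "a = mat_mult (mat_pow shiftU m) (mat_add (diag_mat \<alpha>) (multMp x1 f))"
      "\<alpha> \<longlonglongrightarrow> 0" "continuous_on UNIV f" by blast
    have "a \<in> alg_A x1" unfolding af(1) by (intro A_mult A_pow A_add A_diag af(2) A_M af(3))
    moreover have "a i j = 0 \<or> real i - real j = real_of_int n" for i j
      unfolding af(1) by (auto simp: mult_powU_left mat_add_def diag_mat_def multMp_def nm)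
    ultimately show "a \<in> {a \<in> alg_A x1. \<forall>i j. a i j = 0 \<or> real i - real j = real_of_int n}" by blast
  qed
qed



lemma A_neg:
  fixes x1 :: "'g::{topological_ab_group_add,t2_space}"
  assumes cpt: "compact (UNIV :: 'g set)" and dense: "closure (range (\<lambda>n::int. intmul n x1)) = UNIV"
    and n: "n < 0"
  shows "spectral_A x1 n = {mat_mult (mat_add (diag_mat \<alpha>) (multMp x1 f)) (mat_pow (mat_adj shiftU) (nat (- n))) | \<alpha> f.
           \<alpha> \<longlonglongrightarrow> 0 \<and> continuous_on UNIV f}"
proof -
  define m where "m = nat (- n)"
  have nm: "n = - int m" using n by (simp add: m_def)
  have SC: "Sctx x1 at_top" by (rule Sctx_A[OF cpt dense])
  show ?thesis unfolding spectral_A_iff m_def[symmetric]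
  proof (intro equalityI subsetI)
    fix a assume "a \<in> {a \<in> alg_A x1. \<forall>i j. a i j = 0 \<or> real i - real j = real_of_int n}"
    then have a: "a \<in> alg_A x1" and H: "\<And>i j. a i j = 0 \<or> real i - real j = real_of_int n" by auto
    have supp: "j = i + m" if "a i j \<noteq> 0" for i j
    proof -
      have "real j - real i = real m" using H[of i j] that nm by auto
      then have "real j = real (i + m)" by simp
      then show ?thesis by (simp only: of_nat_eq_iff)
    qed
    have "(\<lambda>k. ext a (k+n) k) \<in> Sctx.S x1 at_top" by (rule A_diag_S[OF cpt dense a])
    from Sctx.S_shift[OF SC this, of "int m"]
    have "(\<lambda>k. ext a k (k + int m)) \<in> Sctx.S x1 at_top" by (simp add: nm)
    then obtain g where g: "continuous_on UNIV g"
      "\<forall>e>0. eventually (\<lambda>k. cmod (ext a k (k + int m) - g (intmul k x1)) < e) at_top"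
      unfolding Sctx.S_def[OF SC] by auto
    define \<alpha> where "\<alpha> k = a k (k + m) - g (intmul (int k) x1)" for k
    have \<alpha>: "\<alpha> \<longlonglongrightarrow> 0"
    proof (rule LIMSEQ_from_at_top[OF g(2)])
      fix e k assume "cmod (ext a (int k) (int k + int m) - g (intmul (int k) x1)) < e"
      then show "cmod (\<alpha> k) < e" by (simp add: \<alpha>_def ext_def nat_int_add)
    qed
    have "a = mat_mult (mat_add (diag_mat \<alpha>) (multMp x1 g)) (mat_pow (mat_adj shiftU) m)"
    proof (intro ext)
      fix i j
      show "a i j = mat_mult (mat_add (diag_mat \<alpha>) (multMp x1 g)) (mat_pow (mat_adj shiftU) m) i j"
      proof (cases "j = i + m")
        case True then show ?thesis
          by (simp add: mult_powUadj_right mat_add_def diag_mat_def multMp_def \<alpha>_def)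
      next
        case False
        then have "a i j = 0" using supp[of i j] by blast
        then show ?thesis using False
          by (auto simp: mult_powUadj_right mat_add_def diag_mat_def multMp_def)
      qed
    qed
    then show "a \<in> {mat_mult (mat_add (diag_mat \<alpha>) (multMp x1 f)) (mat_pow (mat_adj shiftU) m) | \<alpha> f.
           \<alpha> \<longlonglongrightarrow> 0 \<and> continuous_on UNIV f}" using \<alpha> g(1) by blast
  next
    fix a assume "a \<in> {mat_mult (mat_add (diag_mat \<alpha>) (multMp x1 f)) (mat_pow (mat_adj shiftU) m) | \<alpha> f.
           \<alpha> \<longlonglongrightarrow> 0 \<and> continuous_on UNIV f}"
    then obtain \<alpha> f where af: "a = mat_mult (mat_add (diag_mat \<alpha>) (multMp x1 f)) (mat_pow (mat_adj shiftU) m)"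
      "\<alpha> \<longlonglongrightarrow> 0" "continuous_on UNIV f" by blast
    have "a \<in> alg_A x1" unfolding af(1) by (intro A_mult A_powadj A_add A_diag af(2) A_M af(3))
    moreover have "a i j = 0 \<or> real i - real j = real_of_int n" for i j
      unfolding af(1) by (auto simp: mult_powUadj_right mat_add_def diag_mat_def multMp_def nm)
    ultimately show "a \<in> {a \<in> alg_A x1. \<forall>i j. a i j = 0 \<or> real i - real j = real_of_int n}" by blast
  qed
qed

lemma principal_all:
  assumes "\<forall>e>0. eventually (\<lambda>k. cmod (s k) < e) (principal UNIV)"
  shows "s k = 0"
proof (rule ccontr)
  assume "s k \<noteq> 0"
  then have "cmod (s k) > 0" by simp
  then have "eventually (\<lambda>k'. cmod (s k') < cmod (s k)) (principal UNIV)" using assms by blast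
  then have "cmod (s k) < cmod (s k)" by (auto simp: eventually_principal)
  then show False by simp
qed

lemma B_pos:
  fixes x1 :: "'g::{topological_ab_group_add,t2_space}"
  assumes cpt: "compact (UNIV :: 'g set)" and dense: "closure (range (\<lambda>n::int. intmul n x1)) = UNIV"
    and n: "0 \<le> n"
  shows "spectral_B x1 n = {mat_mult (mat_pow shiftV (nat n)) (multM x1 f) | f. continuous_on UNIV f}"
proof -
  define m where "m = nat n"
  have nm: "n = int m" using n by (simp add: m_def)
  have SC: "Sctx x1 (principal UNIV)" by (rule Sctx_B[OF cpt dense])
  show ?thesis unfolding spectral_B_iff m_def[symmetric]
  proof (intro equalityI subsetI)
    fix a assume "a \<in> {a \<in> alg_B x1. \<forall>i j. a i j = 0 \<or> i - j = n}"
    then have a: "a \<in> alg_B x1" and H: "\<And>i j. a i j = 0 \<or> i - j = n" by auto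
    have "(\<lambda>k. a (k+n) k) \<in> Sctx.S x1 (principal UNIV)" by (rule B_diag_S[OF cpt dense a])
    then obtain g where g: "continuous_on UNIV g"
      "\<forall>e>0. eventually (\<lambda>k. cmod (a (k+n) k - g (intmul k x1)) < e) (principal UNIV)"
      unfolding Sctx.S_def[OF SC] by auto
    have ag: "a (k+n) k = g (intmul k x1)" for k using principal_all[OF g(2)] by simp
    have "a = mat_mult (mat_pow shiftV m) (multM x1 g)"
    proof (intro ext)
      fix i j
      show "a i j = mat_mult (mat_pow shiftV m) (multM x1 g) i j"
      proof (cases "i - j = n")
        case True
        then have "i = j + n" by simp
        then show ?thesis using ag[of j] True by (simp add: mult_powV_left diag_mat_def multM_def nm)
      next
        case False then show ?thesis using H[of i j]
          by (auto simp: mult_powV_left diag_mat_def multM_def nm)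
      qed
    qed
    then show "a \<in> {mat_mult (mat_pow shiftV m) (multM x1 f) | f. continuous_on UNIV f}" using g(1) by blast
  next
    fix a assume "a \<in> {mat_mult (mat_pow shiftV m) (multM x1 f) | f. continuous_on UNIV f}"
    then obtain f where af: "a = mat_mult (mat_pow shiftV m) (multM x1 f)" "continuous_on UNIV f" by blast
    have "a \<in> alg_B x1" unfolding af(1) by (intro B_mult B_pow B_M af(2))
    moreover have "a i j = 0 \<or> i - j = n" for i j
      unfolding af(1) by (auto simp: mult_powV_left diag_mat_def multM_def nm)
    ultimately show "a \<in> {a \<in> alg_B x1. \<forall>i j. a i j = 0 \<or> i - j = n}" by blast
  qed
qed

lemma B_neg:
  fixes x1 :: "'g::{topological_ab_group_add,t2_space}"
  assumes cpt: "compact (UNIV :: 'g set)" and dense: "closure (range (\<lambda>n::int. intmul n x1)) = UNIV"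
    and n: "n < 0"
  shows "spectral_B x1 n = {mat_mult (multM x1 f) (mat_pow (mat_adj shiftV) (nat (- n))) | f. continuous_on UNIV f}"
proof -
  define m where "m = nat (- n)"
  have nm: "n = - int m" using n by (simp add: m_def)
  have SC: "Sctx x1 (principal UNIV)" by (rule Sctx_B[OF cpt dense])
  show ?thesis unfolding spectral_B_iff m_def[symmetric]
  proof (intro equalityI subsetI)
    fix a assume "a \<in> {a \<in> alg_B x1. \<forall>i j. a i j = 0 \<or> i - j = n}"
    then have a: "a \<in> alg_B x1" and H: "\<And>i j. a i j = 0 \<or> i - j = n" by auto
    have "(\<lambda>k. a (k+n) k) \<in> Sctx.S x1 (principal UNIV)" by (rule B_diag_S[OF cpt dense a])
    from Sctx.S_shift[OF SC this, of "int m"]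
    have "(\<lambda>k. a k (k + int m)) \<in> Sctx.S x1 (principal UNIV)" by (simp add: nm)
    then obtain g where g: "continuous_on UNIV g"
      "\<forall>e>0. eventually (\<lambda>k. cmod (a k (k + int m) - g (intmul k x1)) < e) (principal UNIV)"
      unfolding Sctx.S_def[OF SC] by auto
    have ag: "a k (k + int m) = g (intmul k x1)" for k using principal_all[OF g(2)] by simp
    have "a = mat_mult (multM x1 g) (mat_pow (mat_adj shiftV) m)"
    proof (intro ext)
      fix i j
      show "a i j = mat_mult (multM x1 g) (mat_pow (mat_adj shiftV) m) i j"
      proof (cases "i - j = n")
        case True
        then have "j = i + int m" using nm by simp
        then show ?thesis using ag[of i] by (simp add: mult_powVadj_right diag_mat_def multM_def)
      next
        case False then show ?thesis using H[of i j]
          by (auto simp: mult_powVadj_right diag_mat_def multM_def nm)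
      qed
    qed
    then show "a \<in> {mat_mult (multM x1 f) (mat_pow (mat_adj shiftV) m) | f. continuous_on UNIV f}" using g(1) by blast
  next
    fix a assume "a \<in> {mat_mult (multM x1 f) (mat_pow (mat_adj shiftV) m) | f. continuous_on UNIV f}"
    then obtain f where af: "a = mat_mult (multM x1 f) (mat_pow (mat_adj shiftV) m)" "continuous_on UNIV f" by blast
    have "a \<in> alg_B x1" unfolding af(1) by (intro B_mult B_powadj B_M af(2))
    moreover have "a i j = 0 \<or> i - j = n" for i j
      unfolding af(1) by (auto simp: mult_powVadj_right diag_mat_def multM_def nm)
    ultimately show "a \<in> {a \<in> alg_B x1. \<forall>i j. a i j = 0 \<or> i - j = n}" by blast
  qed
qed

theorem proposition2p10:
  fixes x1 :: "'g::{topological_ab_group_add, t2_space}"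
  assumes "compact (UNIV :: 'g set)"
    and "infinite (UNIV :: 'g set)"
    and "closure (range (\<lambda>n::int. intmul n x1)) = UNIV"
  shows "\<forall>n::int.
     (n \<ge> 0 \<longrightarrow> spectral_A x1 n =
        {mat_mult (mat_pow shiftU (nat n)) (mat_add (diag_mat \<alpha>) (multMp x1 f)) | \<alpha> f.
           \<alpha> \<longlonglongrightarrow> 0 \<and> continuous_on UNIV f})
   \<and> (n < 0 \<longrightarrow> spectral_A x1 n =
        {mat_mult (mat_add (diag_mat \<alpha>) (multMp x1 f)) (mat_pow (mat_adj shiftU) (nat (- n))) | \<alpha> f.
           \<alpha> \<longlonglongrightarrow> 0 \<and> continuous_on UNIV f})
   \<and> (n \<ge> 0 \<longrightarrow> spectral_B x1 n =
        {mat_mult (mat_pow shiftV (nat n)) (multM x1 f) | f. continuous_on UNIV f})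
   \<and> (n < 0 \<longrightarrow> spectral_B x1 n =
        {mat_mult (multM x1 f) (mat_pow (mat_adj shiftV) (nat (- n))) | f. continuous_on UNIV f})"
  using A_pos[OF assms(1,3)] A_neg[OF assms(1,3)] B_pos[OF assms(1,3)] B_neg[OF assms(1,3)] by blast


end
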